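(* Let $m,n$ be nonnegative integers with $0\leqslant m\leqslant n$, let $\varepsilon\in\{+1,-1\}$, and let $z\in\mathbb{C}\setminus(-\infty,1]$. Then \begin{align*} \frac{\mathrm{d}^{m}}{\mathrm{d}z^{m}}\bigl[P_{n}(z)\ln(z+\varepsilon)\bigr] &= \frac{(2m)!}{2^{m}m!}C_{n-m}^{(m+1/2)}(z)\ln(z+\varepsilon) +\frac{(2m)!}{2^{m}m!}[\psi(n+1)-\psi(n-m+1)]C_{n-m}^{(m+1/2)}(z)\\ &\quad +(-\varepsilon)^{n}\frac{(n+m)!}{(n-m)!}(z^{2}-1)^{-m/2}\sum_{k=0}^{m-1}(-1)^{k}\frac{2k+1}{(n-k)(k+n+1)}P_{k}^{-m}(\varepsilon z)\\ &\quad -(-\varepsilon)^{n+m}\frac{(2m)!}{2^{m}m!}\sum_{k=0}^{n-m-1}(-\varepsilon)^{k}\frac{2k+2m+1}{(n-m-k)(k+n+m+1)}\left[1-\frac{k!\,(n+m)!}{(k+2m)!\,(n-m)!}\right]C_{k}^{(m+1/2)}(z). \end{align*}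
   Context: $P_n(z)$ denotes the Legendre polynomial of degree $n$. $C_{j}^{(\alpha)}(z)$ denotes the Gegenbauer (ultraspherical) polynomial of degree $j$ and parameter $\alpha$. $\psi(\zeta)=\Gamma'(\zeta)/\Gamma(\zeta)$ is the digamma function. The complex plane is cut along the real axis from $-\infty$ to $+1$; for $z\in\mathbb{C}\setminus(-\infty,1]$, $\ln(z\pm1)$ and all fractional powers $(z\pm1)^{s}$ denote principal branches, and $(z^{2}-1)^{-m/2}:=(z-1)^{-m/2}(z+1)^{-m/2}$. The associated Legendre function of the first kind of negative integer order is $P_{k}^{-m}(\zeta)=\frac{1}{m!}\left(\frac{\zeta-1}{\zeta+1}\right)^{m/2}{}_{2}F_{1}\!\left(-k,k+1;1+m;\frac{1-\zeta}{2}\right)$, where for $\zeta=z$ one takes $\left(\frac{z-1}{z+1}\right)^{m/2}:=(z-1)^{m/2}(z+1)^{-m/2}$, and for $\zeta=-z$ one takes $\left(\frac{-z-1}{-z+1}\right)^{m/2}:=(z+1)^{m/2}(z-1)^{-m/2}$ (consistent with $-z\mp1=\mathrm{e}^{\mp\mathrm{i}\pi}(z\pm1)$ on the cut plane). The case $\varepsilon=+1$ concerns $\ln(z+1)$ and the case $\varepsilon=-1$ concerns $\ln(z-1)$. Empty sums are zero. *)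

theory Defs
  imports "HOL-Analysis.Analysis"
begin

definition legendreP :: "nat \<Rightarrow> complex \<Rightarrow> complex" where
  "legendreP n z = (\<Sum>k\<le>n div 2. (-1)^k * of_nat (fact (2*n - 2*k))
      / (2^n * of_nat (fact k) * of_nat (fact (n - k)) * of_nat (fact (n - 2*k))) * z^(n - 2*k))"

definition gegenbauerC :: "nat \<Rightarrow> complex \<Rightarrow> complex \<Rightarrow> complex" where
  "gegenbauerC j a z = (\<Sum>k\<le>j div 2. (-1)^k * pochhammer a (j - k)
      / (of_nat (fact k) * of_nat (fact (j - 2*k))) * (2*z)^(j - 2*k))"

definition hyp2F1_leg :: "nat \<Rightarrow> nat \<Rightarrow> complex \<Rightarrow> complex" where
  "hyp2F1_leg k m x = (\<Sum>j\<le>k. pochhammer (- of_nat k) j * pochhammer (of_nat k + 1) j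
      / (pochhammer (1 + of_nat m) j * of_nat (fact j)) * x^j)"

(* P_k^{-m}(eps * z) for eps in {1,-1}, with the branch conventions of the paper:
   eps = 1:  ((z-1)/(z+1))^{m/2} := (z-1)^{m/2} (z+1)^{-m/2}
   eps = -1: ((-z-1)/(-z+1))^{m/2} := (z+1)^{m/2} (z-1)^{-m/2}  *)
definition legendreP_neg_signed :: "nat \<Rightarrow> nat \<Rightarrow> int \<Rightarrow> complex \<Rightarrow> complex" where
  "legendreP_neg_signed k m eps z =
     (if eps = 1 then (z - 1) powr (of_nat m / 2) * (z + 1) powr (- (of_nat m / 2))
      else (z + 1) powr (of_nat m / 2) * (z - 1) powr (- (of_nat m / 2)))
     / of_nat (fact m) * hyp2F1_leg k m ((1 - of_int eps * z) / 2)"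

end

theory Submission
  imports Defs
begin

lemma poch_half: "pochhammer (1/2::complex) p * 4^p * of_nat (fact p) = of_nat (fact (2*p))"
proof (induction p)
  case 0 then show ?case by simp
next
  case (Suc p)
  have "pochhammer (1/2::complex) (Suc p) * 4^Suc p * of_nat (fact (Suc p))
      = (pochhammer (1/2) p * 4^p * of_nat (fact p)) * ((1/2 + of_nat p) * 4 * of_nat (Suc p))"
    by (simp add: pochhammer_rec' algebra_simps)
  also have "\<dots> = of_nat (fact (2*p)) * (of_nat (2*p+1) * of_nat (2*p+2))"
    using Suc by (simp add: algebra_simps)
  also have "\<dots> = of_nat (fact (2 * Suc p))"
    by (simp add: algebra_simps)
  finally show ?case .
qed

lemma legendre_gegen: "legendreP n z = gegenbauerC n (1/2) z"
  unfolding legendreP_def gegenbauerC_def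
proof (rule sum.cong[OF refl])
  fix k assume "k \<in> {..n div 2}"
  hence k: "2*k \<le> n" by auto
  define p where "p = n - k"
  have h: "pochhammer (1/2::complex) p = of_nat (fact (2*p)) / (4^p * of_nat (fact p))"
    using poch_half[of p] by (simp add: field_simps)
  have e1: "2*n - 2*k = 2*p" using k by (simp add: p_def)
  have e2: "(4::complex)^p = 2^n * 2^(n-2*k)"
  proof -
    have "2*p = n + (n - 2*k)" using k by (simp add: p_def)
    hence "(4::complex)^p = 2^(n + (n-2*k))" by (metis power_mult power2_eq_square mult_2 numeral_Bit0 numeral_One one_add_one)
    thus ?thesis by (simp add: power_add)
  qed
  show "(-1)^k * of_nat (fact (2*n - 2*k)) / (2^n * of_nat (fact k) * of_nat (fact (n - k)) * of_nat (fact (n - 2*k))) * z^(n - 2*k)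
     = (-1)^k * pochhammer (1/2) (n - k) / (of_nat (fact k) * of_nat (fact (n - 2*k))) * (2*z)^(n - 2*k)"
    unfolding p_def[symmetric] e1 h e2 by (simp add: power_mult_distrib field_simps)
qed

lemma pow_lin_deriv: "((\<lambda>w. c * (2*w)^p) has_field_derivative c * (of_nat p * (2*z)^(p-1) * 2)) (at (z::complex))"
proof -
  have "((\<lambda>w. (2*w)^p) has_field_derivative of_nat p * (2*z)^(p-1) * 2) (at z)"
    by (rule derivative_eq_intros refl | simp)+
  thus ?thesis by (rule DERIV_cmult)
qed

lemma aux_cancel: "(S::complex) \<noteq> 0 \<Longrightarrow> F1 \<noteq> 0 \<Longrightarrow> F2 \<noteq> 0 \<Longrightarrow>
  c*(a*P)/(F1*(S*F2))*(S*W*2) = 2*a*(c*P/(F1*F2)*W)"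
  by (simp add: field_simps)

lemma gegen_deriv:
  "(gegenbauerC (Suc j) a has_field_derivative (2*a*gegenbauerC j (a+1) z)) (at z)"
proof -
  define d where "d k = (-1)^k * pochhammer a (Suc j - k) / (of_nat (fact k) * of_nat (fact (Suc j - 2*k)))
        * (of_nat (Suc j - 2*k) * (2*z)^(Suc j - 2*k - 1) * 2)" for k
  have D: "(gegenbauerC (Suc j) a has_field_derivative (\<Sum>k\<le>Suc j div 2. d k)) (at z)"
    unfolding gegenbauerC_def d_def
    by (rule DERIV_sum, rule pow_lin_deriv)
  have s1: "(\<Sum>k\<le>Suc j div 2. d k) = (\<Sum>k\<le>j div 2. d k)"
  proof (cases "Suc j div 2 = j div 2")
    case True then show ?thesis by simp
  next
    case False
    hence e: "Suc j div 2 = Suc (j div 2)" by presburger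
    have "Suc j - 2 * Suc (j div 2) = 0" using False by presburger
    hence "d (Suc (j div 2)) = 0" by (simp add: d_def)
    thus ?thesis unfolding e by simp
  qed
  have s2: "(\<Sum>k\<le>j div 2. d k) = 2*a*gegenbauerC j (a+1) z"
    unfolding gegenbauerC_def sum_distrib_left
  proof (rule sum.cong[OF refl])
    fix k assume "k \<in> {..j div 2}"
    hence k: "2*k \<le> j" by auto
    have e1: "Suc j - k = Suc (j - k)" "Suc j - 2*k = Suc (j - 2*k)" "Suc (j - 2*k) - 1 = j - 2*k"
      using k by auto
    show "d k = 2 * a * ((-1)^k * pochhammer (a+1) (j - k) / (of_nat (fact k) * of_nat (fact (j - 2*k))) * (2*z)^(j - 2*k))"
      unfolding d_def e1 fact_Suc of_nat_id of_nat_mult pochhammer_rec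
      by (rule aux_cancel) (simp_all del: of_nat_Suc)
  qed
  show ?thesis using D s1 s2 by simp
qed

definition Pd :: "nat \<Rightarrow> nat \<Rightarrow> complex \<Rightarrow> complex" where
  "Pd l m = (deriv ^^ m) (legendreP l)"

definition cc :: "nat \<Rightarrow> complex" where
  "cc m = of_nat (fact (2*m)) / (2^m * of_nat (fact m))"

lemma Pd_Suc: "Pd l (Suc m) = deriv (Pd l m)"
  by (simp add: Pd_def)

lemma cc_Suc': "cc (Suc m) = cc m * (2 * of_nat m + 1)"
proof -
  have f: "of_nat (fact (2 * Suc m)) = (of_nat (fact (2*m)) * ((2 * of_nat m + 1) * (2 * (of_nat m + 1))) :: complex)"
    by (simp add: algebra_simps)
  have g: "of_nat (fact (Suc m)) = ((of_nat m + 1) * of_nat (fact m) :: complex)"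
    by (simp add: algebra_simps)
  have nz: "(of_nat m + 1 :: complex) \<noteq> 0" by (metis of_nat_Suc of_nat_eq_0_iff nat.distinct(1) add.commute)
  have aux: "\<And>F a c P G. (c::complex) \<noteq> 0 \<Longrightarrow> P \<noteq> 0 \<Longrightarrow> G \<noteq> 0 \<Longrightarrow>
      F*(a*(2*c))/(2*P*(c*G)) = F/(P*G)*a" by (simp add: field_simps)
  show ?thesis unfolding cc_def f g power_Suc by (rule aux[OF nz]) auto

qed

lemma cc_Suc: "cc m * (2 * (of_nat m + 1/2)) = cc (Suc m)"
  unfolding cc_Suc' by (simp add: algebra_simps)

lemma Pd_formula: "m \<le> l \<Longrightarrow> Pd l m = (\<lambda>z. cc m * gegenbauerC (l-m) (of_nat m + 1/2) z)"
proof (induction m)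
  case 0 then show ?case by (simp add: Pd_def cc_def legendre_gegen[abs_def])
next
  case (Suc m)
  hence IH: "Pd l m = (\<lambda>z. cc m * gegenbauerC (Suc (l - Suc m)) (of_nat m + 1/2) z)"
    by (simp add: Suc_diff_Suc)
  show ?case
  proof
    fix z
    have "((\<lambda>z. cc m * gegenbauerC (Suc (l - Suc m)) (of_nat m + 1/2) z) has_field_derivative
        cc m * (2 * (of_nat m + 1/2) * gegenbauerC (l - Suc m) (of_nat m + 1/2 + 1) z)) (at z)"
      by (rule DERIV_cmult, rule gegen_deriv)
    hence "deriv (Pd l m) z = cc m * (2 * (of_nat m + 1/2) * gegenbauerC (l - Suc m) (of_nat m + 1/2 + 1) z)"
      unfolding IH by (rule DERIV_imp_deriv)
    also have "\<dots> = cc (Suc m) * gegenbauerC (l - Suc m) (of_nat (Suc m) + 1/2) z"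
      by (simp add: cc_Suc' algebra_simps)
    finally show "Pd l (Suc m) z = cc (Suc m) * gegenbauerC (l - Suc m) (of_nat (Suc m) + 1/2) z"
      by (simp add: Pd_Suc)
  qed
qed

lemma gegen0: "gegenbauerC 0 a z = 1"
  by (simp add: gegenbauerC_def)

lemma Pd_top: "Pd l l = (\<lambda>z. cc l)"
  using Pd_formula[of l l] by (simp add: gegen0)

lemma Pd_zero: "l < m \<Longrightarrow> Pd l m = (\<lambda>z. 0)"
proof (induction m)
  case 0 then show ?case by simp
next
  case (Suc m)
  show ?case
  proof (cases "l < m")
    case True
    then show ?thesis using Suc by (simp add: Pd_Suc)
  next
    case False
    hence "l = m" using Suc by simp
    then show ?thesis by (simp add: Pd_Suc Pd_top)
  qed
qed

lemma Pd_deriv: "(Pd l m has_field_derivative Pd l (Suc m) z) (at z)"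
proof -
  consider "m < l" | "m = l" | "l < m" by linarith
  then show ?thesis
  proof cases
    case 1
    hence IH: "Pd l m = (\<lambda>z. cc m * gegenbauerC (Suc (l - Suc m)) (of_nat m + 1/2) z)"
      using Pd_formula[of m l] by (simp add: Suc_diff_Suc)
    have "((\<lambda>z. cc m * gegenbauerC (Suc (l - Suc m)) (of_nat m + 1/2) z) has_field_derivative
        cc m * (2 * (of_nat m + 1/2) * gegenbauerC (l - Suc m) (of_nat m + 1/2 + 1) z)) (at z)"
      by (rule DERIV_cmult, rule gegen_deriv)
    moreover have "cc m * (2 * (of_nat m + 1/2) * gegenbauerC (l - Suc m) (of_nat m + 1/2 + 1) z) = Pd l (Suc m) z"
      using Pd_formula[of "Suc m" l] 1 by (simp add: cc_Suc' algebra_simps)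
    ultimately show ?thesis unfolding IH by simp
  next
    case 2
    then show ?thesis using Pd_top[of l] Pd_zero[of l "Suc l"] by simp
  next
    case 3
    then show ?thesis using Pd_zero[of l m] Pd_zero[of l "Suc m"] by simp
  qed
qed

definition ha :: "nat \<Rightarrow> nat \<Rightarrow> nat \<Rightarrow> complex" where
  "ha k m j = pochhammer (- of_nat k) j * pochhammer (of_nat k + 1) j
      / (pochhammer (1 + of_nat m) j * of_nat (fact j))"

lemma ha_zero: "k < j \<Longrightarrow> ha k m j = 0"
  unfolding ha_def by (subst pochhammer_eq_0_iff[THEN iffD2]) auto

lemma hyp_ext: "k \<le> N \<Longrightarrow> hyp2F1_leg k m x = (\<Sum>j\<le>N. ha k m j * x^j)"
proof -
  assume kN: "k \<le> N"
  have "(\<Sum>j\<le>N. ha k m j * x^j) = (\<Sum>j\<le>k. ha k m j * x^j)"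
    by (rule sum.mono_neutral_right) (use kN ha_zero in auto)
  thus ?thesis by (simp add: hyp2F1_leg_def ha_def)
qed

lemma poch_nz: "pochhammer (of_nat m + 2 :: complex) i \<noteq> 0"
proof
  assume "pochhammer (of_nat m + 2 :: complex) i = 0"
  then obtain k where "(of_nat m + 2 :: complex) = - of_nat k" by (auto simp: pochhammer_eq_0_iff)
  hence "(of_nat m + 2 :: complex) + of_nat k = 0" by (simp add: eq_neg_iff_add_eq_0)
  hence "(of_nat (m + 2 + k) :: complex) = 0" by (simp add: add_ac)
  thus False by (simp only: of_nat_eq_0_iff)
qed

lemma poch_nz1: "pochhammer (1 + of_nat m :: complex) i \<noteq> 0"
proof
  assume "pochhammer (1 + of_nat m :: complex) i = 0"
  then obtain k where "(1 + of_nat m :: complex) = - of_nat k" by (auto simp: pochhammer_eq_0_iff)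
  hence "(1 + of_nat m :: complex) + of_nat k = 0" by (simp add: eq_neg_iff_add_eq_0)
  hence "(of_nat (1 + m + k) :: complex) = 0" by (simp add: add_ac)
  thus False by (simp only: of_nat_eq_0_iff)
qed

lemma nat_nz: "(of_nat a + of_nat b + 1 :: complex) \<noteq> 0" "(of_nat a + 1 :: complex) \<noteq> 0"
  "(of_nat a + 2 :: complex) \<noteq> 0" "(of_nat a + of_nat b + 2 :: complex) \<noteq> 0"
proof -
  have "(of_nat (a+b+1) :: complex) \<noteq> 0" "(of_nat (a+1) :: complex) \<noteq> 0"
       "(of_nat (a+2) :: complex) \<noteq> 0" "(of_nat (a+b+2) :: complex) \<noteq> 0"
    by (simp_all only: of_nat_eq_0_iff)
  thus "(of_nat a + of_nat b + 1 :: complex) \<noteq> 0" "(of_nat a + 1 :: complex) \<noteq> 0"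
  "(of_nat a + 2 :: complex) \<noteq> 0" "(of_nat a + of_nat b + 2 :: complex) \<noteq> 0" by (simp_all add: add_ac)
qed

lemma pm1: "pochhammer (- of_nat (Suc n) :: complex) (Suc i) = - (of_nat n + 1) * pochhammer (- of_nat n) i"
  by (simp add: pochhammer_rec algebra_simps)
lemma pm2: "pochhammer (- of_nat n :: complex) (Suc i) = (of_nat i - of_nat n) * pochhammer (- of_nat n) i"
  by (simp add: pochhammer_rec' algebra_simps)
lemma pp1: "pochhammer (of_nat (Suc n) + 1 :: complex) (Suc i) = (of_nat n + 2 + of_nat i) * pochhammer (of_nat n + 2) i"
  by (simp add: pochhammer_rec' algebra_simps)
lemma pp2: "pochhammer (of_nat n + 1 :: complex) (Suc i) = (of_nat n + 1) * pochhammer (of_nat n + 2) i"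
  by (simp add: pochhammer_rec algebra_simps)
lemma pq1: "pochhammer (1 + of_nat m :: complex) (Suc i) = (of_nat m + 1) * pochhammer (of_nat m + 2) i"
  by (simp add: pochhammer_rec algebra_simps)
lemma pq2: "pochhammer (1 + of_nat (Suc m) :: complex) (Suc i) = (of_nat m + 2 + of_nat i) * pochhammer (of_nat m + 2) i"
  by (simp add: pochhammer_rec' algebra_simps)

lemma ct: "(of_nat m + 1) * (ha (Suc n) m j + ha n m j) =
   (of_nat n + of_nat m + 2) * ha (Suc n) (Suc m) j + (of_nat m - of_nat n) * ha n (Suc m) j"
proof (cases j)
  case 0 then show ?thesis by (simp add: ha_def algebra_simps)
next
  case (Suc i)
  define P1 where "P1 = pochhammer (- of_nat n :: complex) i"
  define P2 where "P2 = pochhammer (of_nat n + 2 :: complex) i"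
  define Q where "Q = pochhammer (of_nat m + 2 :: complex) i"
  define F where "F = (of_nat (fact (Suc i)) :: complex)"
  have Q: "Q \<noteq> 0" unfolding Q_def by (rule poch_nz)
  have F: "F \<noteq> 0" unfolding F_def of_nat_fact by (rule fact_nonzero)
  have m1: "(of_nat m + 1 :: complex) \<noteq> 0" by (rule nat_nz)
  have m2: "(of_nat m + 2 + of_nat i :: complex) \<noteq> 0" using nat_nz(4)[of m i] by (simp add: algebra_simps)
  show ?thesis unfolding Suc ha_def pm1 pp1 pq2 unfolding pm2 pp2 pq1 P1_def[symmetric] P2_def[symmetric] Q_def[symmetric] F_def[symmetric]
    using Q F m1 m2 by (simp add: divide_simps) algebra
qed

lemma neg1_sq: "(-1::complex)^n * (-1)^n = 1"
  by (induct n) auto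

lemma hyp0: "hyp2F1_leg 0 m x = 1"
  by (simp add: hyp2F1_leg_def)

lemma cs: "(of_nat m + 1) * hyp2F1_leg n m x - (of_nat n + of_nat m + 1) * hyp2F1_leg n (Suc m) x
   = (-1)^n * (\<Sum>l<n. (-1)^l * (2 * of_nat l + 1) * hyp2F1_leg l (Suc m) x)"
proof (induction n)
  case 0 then show ?case by (simp add: hyp0)
next
  case (Suc n)
  have h1: "\<And>m. hyp2F1_leg (Suc n) m x = (\<Sum>j\<le>Suc n. ha (Suc n) m j * x^j)" by (rule hyp_ext) simp
  have h2: "\<And>m. hyp2F1_leg n m x = (\<Sum>j\<le>Suc n. ha n m j * x^j)" by (rule hyp_ext) simp
  have key: "((of_nat m + 1) * hyp2F1_leg (Suc n) m x - (of_nat (Suc n) + of_nat m + 1) * hyp2F1_leg (Suc n) (Suc m) x)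
     + ((of_nat m + 1) * hyp2F1_leg n m x - (of_nat n + of_nat m + 1) * hyp2F1_leg n (Suc m) x)
     + (2 * of_nat n + 1) * hyp2F1_leg n (Suc m) x = 0"
  proof -
    have "((of_nat m + 1) * hyp2F1_leg (Suc n) m x - (of_nat (Suc n) + of_nat m + 1) * hyp2F1_leg (Suc n) (Suc m) x)
     + ((of_nat m + 1) * hyp2F1_leg n m x - (of_nat n + of_nat m + 1) * hyp2F1_leg n (Suc m) x)
     + (2 * of_nat n + 1) * hyp2F1_leg n (Suc m) x
     = (\<Sum>j\<le>Suc n. ((of_nat m + 1) * (ha (Suc n) m j * x^j) - (of_nat (Suc n) + of_nat m + 1) * (ha (Suc n) (Suc m) j * x^j))
     + ((of_nat m + 1) * (ha n m j * x^j) - (of_nat n + of_nat m + 1) * (ha n (Suc m) j * x^j))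
     + (2 * of_nat n + 1) * (ha n (Suc m) j * x^j))"
      unfolding h1 h2 sum_distrib_left sum_subtractf[symmetric] sum.distrib[symmetric] ..
    also have "\<dots> = (\<Sum>j\<le>Suc n. 0)"
    proof (rule sum.cong[OF refl])
      fix j
      show "((of_nat m + 1) * (ha (Suc n) m j * x^j) - (of_nat (Suc n) + of_nat m + 1) * (ha (Suc n) (Suc m) j * x^j))
       + ((of_nat m + 1) * (ha n m j * x^j) - (of_nat n + of_nat m + 1) * (ha n (Suc m) j * x^j))
       + (2 * of_nat n + 1) * (ha n (Suc m) j * x^j) = 0"
      proof -
        have "((of_nat m + 1) * (ha (Suc n) m j * x^j) - (of_nat (Suc n) + of_nat m + 1) * (ha (Suc n) (Suc m) j * x^j))
         + ((of_nat m + 1) * (ha n m j * x^j) - (of_nat n + of_nat m + 1) * (ha n (Suc m) j * x^j))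
         + (2 * of_nat n + 1) * (ha n (Suc m) j * x^j) = x^j * ((of_nat m + 1) * (ha (Suc n) m j + ha n m j) -
             ((of_nat n + of_nat m + 2) * ha (Suc n) (Suc m) j + (of_nat m - of_nat n) * ha n (Suc m) j))"
          by (simp only: of_nat_Suc) algebra
        also have "\<dots> = 0" using ct[of m n j] by simp
        finally show ?thesis .
      qed
    qed
    finally show ?thesis by simp
  qed
  have r: "(-1::complex)^Suc n * (\<Sum>l<Suc n. (-1)^l * (2 * of_nat l + 1) * hyp2F1_leg l (Suc m) x)
     = - ((-1)^n * (\<Sum>l<n. (-1)^l * (2 * of_nat l + 1) * hyp2F1_leg l (Suc m) x))
       - (2 * of_nat n + 1) * hyp2F1_leg n (Suc m) x"
    using neg1_sq[of n] by (simp add: algebra_simps)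
  show ?case unfolding r Suc.IH[symmetric] using key by (simp add: algebra_simps)
qed

lemma poch_shift1: "pochhammer (1 + of_nat m :: complex) j * (1 + of_nat m + of_nat j) = (1 + of_nat m) * pochhammer (2 + of_nat m) j"
proof -
  have "pochhammer (1 + of_nat m :: complex) (Suc j) = pochhammer (1 + of_nat m) j * (1 + of_nat m + of_nat j)"
    by (simp add: pochhammer_rec' algebra_simps)
  moreover have "pochhammer (1 + of_nat m :: complex) (Suc j) = (1 + of_nat m) * pochhammer (2 + of_nat m) j"
    by (simp add: pochhammer_rec algebra_simps)
  ultimately show ?thesis by simp
qed

lemma dt: "- of_nat m * ha l m j - (of_nat j + 1) * ha l m (Suc j) + of_nat j * ha l m j
   = (of_nat l - of_nat m) * (of_nat l + of_nat m + 1) / (of_nat m + 1) * ha l (Suc m) j"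
proof -
  define A where "A = pochhammer (- of_nat l :: complex) j"
  define B where "B = pochhammer (of_nat l + 1 :: complex) j"
  define C where "C = pochhammer (1 + of_nat m :: complex) j"
  define F where "F = (of_nat (fact j) :: complex)"
  have C: "C \<noteq> 0" unfolding C_def by (rule poch_nz1)
  have F: "F \<noteq> 0" unfolding F_def of_nat_fact by (rule fact_nonzero)
  have m1: "(1 + of_nat m :: complex) \<noteq> 0" using nat_nz(2)[of m] by (simp add: add_ac)
  have m2: "(1 + of_nat m + of_nat j :: complex) \<noteq> 0" using nat_nz(1)[of m j] by (simp add: add_ac)
  have D2: "pochhammer (2 + of_nat m :: complex) j = C * (1 + of_nat m + of_nat j) / (1 + of_nat m)"
    using poch_shift1[of m j] m1 unfolding C_def by (simp add: field_simps)
  have e1: "pochhammer (- of_nat l :: complex) (Suc j) = (of_nat j - of_nat l) * A"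
    unfolding A_def by (simp add: pochhammer_rec' algebra_simps)
  have e2: "pochhammer (of_nat l + 1 :: complex) (Suc j) = (of_nat l + 1 + of_nat j) * B"
    unfolding B_def by (simp add: pochhammer_rec' algebra_simps)
  have e3: "pochhammer (1 + of_nat m :: complex) (Suc j) = (1 + of_nat m + of_nat j) * C"
    unfolding C_def by (simp add: pochhammer_rec' algebra_simps)
  have e4: "(of_nat (fact (Suc j)) :: complex) = (of_nat j + 1) * F"
    unfolding F_def by (simp add: algebra_simps)
  have e5: "pochhammer (1 + of_nat (Suc m) :: complex) j = C * (1 + of_nat m + of_nat j) / (1 + of_nat m)"
    using D2 by (simp add: add_ac)
  show ?thesis unfolding ha_def e1 e2 e3 e4 e5 A_def[symmetric] B_def[symmetric] C_def[symmetric] F_def[symmetric]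
    using C F m1 m2 nat_nz(2)[of j] nat_nz(2)[of m] by (simp add: divide_simps) algebra
qed

lemma haf: "ha l 0 j = pochhammer (- of_nat l) j * pochhammer (of_nat l + 1) j / (of_nat (fact j) * of_nat (fact j))"
  unfolding ha_def by (simp add: pochhammer_fact[symmetric])

lemma bf: "(of_nat l + 2) * ha (Suc (Suc l)) 0 j = (2* of_nat l + 3) * (ha (Suc l) 0 j - 2 * (if j = 0 then 0 else ha (Suc l) 0 (j - 1))) - (of_nat l + 1) * ha l 0 j"
proof (cases j)
  case 0 then show ?thesis by (simp add: haf algebra_simps)
next
  case (Suc j')
  show ?thesis
  proof (cases j')
    case 0
    then show ?thesis using Suc by (simp add: haf algebra_simps)
  next
    case (Suc i)
    define L where "L = (of_nat l :: complex)"
    define I where "I = (of_nat i :: complex)"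
    define X where "X = pochhammer (- of_nat l :: complex) i"
    define Y where "Y = pochhammer (of_nat l + 3 :: complex) i"
    define Fi where "Fi = (of_nat (fact i) :: complex)"
    have q1: "pochhammer (- of_nat (Suc (Suc l)) :: complex) (Suc (Suc i)) = (-(L+2))*((-(L+1))*X)"
      unfolding X_def L_def by (subst pochhammer_rec, subst pochhammer_rec) (simp add: algebra_simps)
    have q2: "pochhammer (- of_nat (Suc l) :: complex) (Suc (Suc i)) = (-(L+1))*((I - L)*X)"
      unfolding X_def L_def I_def by (subst pochhammer_rec, subst pochhammer_rec') (simp add: algebra_simps)
    have q3: "pochhammer (- of_nat (Suc l) :: complex) (Suc i) = (-(L+1))*X"
      unfolding X_def L_def by (subst pochhammer_rec) (simp add: algebra_simps)
    have q4: "pochhammer (- of_nat l :: complex) (Suc (Suc i)) = (I + 1 - L)*((I-L)*X)"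
      unfolding X_def L_def I_def by (subst pochhammer_rec', subst pochhammer_rec') (simp add: algebra_simps)
    have q5: "pochhammer (of_nat (Suc (Suc l)) + 1 :: complex) (Suc (Suc i)) = (L+4+I)*((L+3+I)*Y)"
      unfolding Y_def L_def I_def by (subst pochhammer_rec', subst pochhammer_rec') (simp add: algebra_simps)
    have q6: "pochhammer (of_nat (Suc l) + 1 :: complex) (Suc (Suc i)) = (L+2)*((L+3+I)*Y)"
      unfolding Y_def L_def I_def by (subst pochhammer_rec, subst pochhammer_rec') (simp add: algebra_simps)
    have q7: "pochhammer (of_nat (Suc l) + 1 :: complex) (Suc i) = (L+2)*Y"
      unfolding Y_def L_def by (subst pochhammer_rec) (simp add: algebra_simps)
    have q8: "pochhammer (of_nat l + 1 :: complex) (Suc (Suc i)) = (L+1)*((L+2)*Y)"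
      unfolding Y_def L_def by (subst pochhammer_rec, subst pochhammer_rec) (simp add: algebra_simps)
    have f1: "(of_nat (fact (Suc (Suc i))) :: complex) = (I+2)*((I+1)*Fi)"
      unfolding Fi_def I_def by (simp add: algebra_simps)
    have f2: "(of_nat (fact (Suc i)) :: complex) = (I+1)*Fi"
      unfolding Fi_def I_def by (simp add: algebra_simps)
    have Fi: "Fi \<noteq> 0" unfolding Fi_def of_nat_fact by (rule fact_nonzero)
    have i1: "I + 1 \<noteq> 0" "I + 2 \<noteq> 0" unfolding I_def using nat_nz(2,3)[of i] by auto
    have g: "(if j = 0 then 0 else ha (Suc l) 0 (j - 1)) = ha (Suc l) 0 (Suc i)" using Suc \<open>j = Suc j'\<close> by simp
    show ?thesis unfolding g unfolding \<open>j = Suc j'\<close> Suc haf q1 q2 q3 q5 q6 q7 f1 f2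
      unfolding q4 q8 unfolding L_def[symmetric]
      using Fi i1 by (simp add: divide_simps) algebra
  qed
qed

lemma shift_sum: "(\<Sum>j\<le>Suc M. (if j = 0 then 0 else f (j-1))) = (\<Sum>j\<le>M. f j)"
  by (subst sum.atMost_Suc_shift) simp

lemma bonnetF: "(of_nat l + 2) * hyp2F1_leg (Suc (Suc l)) 0 ((1-z)/2)
   = (2* of_nat l + 3) * z * hyp2F1_leg (Suc l) 0 ((1-z)/2) - (of_nat l + 1) * hyp2F1_leg l 0 ((1-z)/2)"
proof -
  define x where "x = (1 - z)/2"
  have zx: "z = 1 - 2*x" unfolding x_def by (simp add: field_simps)
  define N where "N = Suc (Suc (Suc l))"
  have hA: "hyp2F1_leg (Suc (Suc l)) 0 x = (\<Sum>j\<le>N. ha (Suc (Suc l)) 0 j * x^j)" by (rule hyp_ext) (simp add: N_def)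
  have hB: "hyp2F1_leg (Suc l) 0 x = (\<Sum>j\<le>N. ha (Suc l) 0 j * x^j)" by (rule hyp_ext) (simp add: N_def)
  have hB': "hyp2F1_leg (Suc l) 0 x = (\<Sum>j\<le>Suc (Suc l). ha (Suc l) 0 j * x^j)" by (rule hyp_ext) simp
  have hC: "hyp2F1_leg l 0 x = (\<Sum>j\<le>N. ha l 0 j * x^j)" by (rule hyp_ext) (simp add: N_def)
  have sh: "x * hyp2F1_leg (Suc l) 0 x = (\<Sum>j\<le>N. (if j = 0 then 0 else ha (Suc l) 0 (j-1) * x^j))"
  proof -
    have "x * hyp2F1_leg (Suc l) 0 x = (\<Sum>j\<le>Suc (Suc l). ha (Suc l) 0 j * x^Suc j)"
      unfolding hB' sum_distrib_left by (simp add: algebra_simps)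
    also have "\<dots> = (\<Sum>j\<le>N. (if j = 0 then 0 else ha (Suc l) 0 (j-1) * x^(Suc (j-1))))"
      unfolding N_def by (rule shift_sum[symmetric])
    also have "\<dots> = (\<Sum>j\<le>N. (if j = 0 then 0 else ha (Suc l) 0 (j-1) * x^j))"
      by (rule sum.cong) auto
    finally show ?thesis .
  qed
  have "(2* of_nat l + 3) * z * hyp2F1_leg (Suc l) 0 x - (of_nat l + 1) * hyp2F1_leg l 0 x
      = (2* of_nat l + 3) * (hyp2F1_leg (Suc l) 0 x - 2 * (x * hyp2F1_leg (Suc l) 0 x)) - (of_nat l + 1) * hyp2F1_leg l 0 x"
    unfolding zx by (simp add: algebra_simps)
  also have "\<dots> = (2* of_nat l + 3) * ((\<Sum>j\<le>N. ha (Suc l) 0 j * x^j) - 2 * (\<Sum>j\<le>N. (if j = 0 then 0 else ha (Suc l) 0 (j-1) * x^j))) - (of_nat l + 1) * (\<Sum>j\<le>N. ha l 0 j * x^j)"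
    unfolding sh unfolding hB hC ..
  also have "\<dots> = (\<Sum>j\<le>N. (2* of_nat l + 3) * (ha (Suc l) 0 j * x^j - 2 * (if j = 0 then 0 else ha (Suc l) 0 (j-1) * x^j)) - (of_nat l + 1) * (ha l 0 j * x^j))"
    unfolding sum_distrib_left sum_subtractf[symmetric] ..
  also have "\<dots> = (\<Sum>j\<le>N. (of_nat l + 2) * (ha (Suc (Suc l)) 0 j * x^j))"
  proof (rule sum.cong[OF refl])
    fix j
    show "(2* of_nat l + 3) * (ha (Suc l) 0 j * x^j - 2 * (if j = 0 then 0 else ha (Suc l) 0 (j-1) * x^j)) - (of_nat l + 1) * (ha l 0 j * x^j)
        = (of_nat l + 2) * (ha (Suc (Suc l)) 0 j * x^j)"
    proof -
      define g where "g = (if j = 0 then 0 else ha (Suc l) 0 (j-1))"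
      have gg: "(if j = 0 then 0 else ha (Suc l) 0 (j-1) * x^j) = g * x^j" unfolding g_def by simp
      have "(2 * of_nat l + 3) * (ha (Suc l) 0 j * x^j - 2 * (if j = 0 then 0 else ha (Suc l) 0 (j-1) * x^j)) - (of_nat l + 1) * (ha l 0 j * x^j)
          = ((2 * of_nat l + 3) * (ha (Suc l) 0 j - 2 * g) - (of_nat l + 1) * ha l 0 j) * x^j"
        unfolding gg by algebra
      also have "\<dots> = ((of_nat l + 2) * ha (Suc (Suc l)) 0 j) * x^j" unfolding g_def bf[of l j] ..
      finally show ?thesis by (simp only: mult.assoc)
    qed
  qed
  also have "\<dots> = (of_nat l + 2) * hyp2F1_leg (Suc (Suc l)) 0 x"
    unfolding hA sum_distrib_left ..
  finally show ?thesis unfolding x_def by simp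
qed

definition bt :: "nat \<Rightarrow> nat \<Rightarrow> complex" where
  "bt l k = (if 2*k \<le> l then (-1)^k * of_nat (fact (2*l - 2*k))
      / (2^l * of_nat (fact k) * of_nat (fact (l - k)) * of_nat (fact (l - 2*k))) else 0)"

lemma legendre_ext: "l div 2 \<le> N \<Longrightarrow> legendreP l z = (\<Sum>k\<le>N. bt l k * z^(l - 2*k))"
proof -
  assume N: "l div 2 \<le> N"
  have "(\<Sum>k\<le>N. bt l k * z^(l - 2*k)) = (\<Sum>k\<le>l div 2. bt l k * z^(l - 2*k))"
    by (rule sum.mono_neutral_right) (use N in \<open>auto simp: bt_def\<close>)
  also have "\<dots> = legendreP l z"
    unfolding legendreP_def by (rule sum.cong) (auto simp: bt_def)
  finally show ?thesis by simp
qed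

lemma fact_nz: "(of_nat (fact n) :: complex) \<noteq> 0"
  unfolding of_nat_fact by (rule fact_nonzero)

lemma bp_term: "(of_nat l + 2) * bt (Suc (Suc l)) k = (2* of_nat l + 3) * bt (Suc l) k - (of_nat l + 1) * (if k = 0 then 0 else bt l (k - 1))"
proof (cases k)
  case 0
  define A where "A = (of_nat (fact (2*l)) :: complex)"
  define B where "B = (of_nat (fact l) :: complex)"
  define L where "L = (of_nat l :: complex)"
  have a1: "(of_nat (fact (2 * Suc (Suc l))) :: complex) = (2*L+4)*((2*L+3)*((2*L+2)*((2*L+1)*A)))"
    unfolding A_def L_def by (simp add: algebra_simps)
  have a2: "(of_nat (fact (2 * Suc l)) :: complex) = (2*L+2)*((2*L+1)*A)"
    unfolding A_def L_def by (simp add: algebra_simps)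
  have b1: "(of_nat (fact (Suc (Suc l))) :: complex) = (L+2)*((L+1)*B)"
    unfolding B_def L_def by (simp add: algebra_simps)
  have b2: "(of_nat (fact (Suc l)) :: complex) = (L+1)*B"
    unfolding B_def L_def by (simp add: algebra_simps)
  have nz: "B \<noteq> 0" "L + 1 \<noteq> 0" "L + 2 \<noteq> 0" unfolding B_def L_def
    by (rule fact_nz, rule nat_nz(2), rule nat_nz(3))
  show ?thesis unfolding 0 bt_def
    by (simp only: if_True le0 mult_0_right diff_zero power_0 fact_0 of_nat_1 mult_1_left mult_1_right a1 a2 b1 b2 L_def[symmetric] if_True refl)
       (use nz in \<open>simp add: divide_simps, algebra\<close>)
next
  case (Suc k')
  consider (a) "2*k' + 1 \<le> l" | (b) "l = 2*k'" | (c) "l < 2*k'" by linarith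
  then show ?thesis
  proof cases
    case a
    then obtain r where lr: "l = 2*k' + 1 + r" by (metis le_add_diff_inverse)
    define A where "A = (of_nat (fact (2*k' + 2*r + 2)) :: complex)"
    define B where "B = (of_nat (fact k') :: complex)"
    define C where "C = (of_nat (fact (k' + r + 1)) :: complex)"
    define D where "D = (of_nat (fact r) :: complex)"
    define K where "K = (of_nat k' :: complex)"
    define R where "R = (of_nat r :: complex)"
    define P where "P = (2::complex)^l"
    have n1: "2 * Suc (Suc l) - 2 * Suc k' = Suc (Suc (2*k' + 2*r + 2))" using lr by simp
    have n2: "Suc (Suc l) - Suc k' = Suc (k' + r + 1)" using lr by simp
    have n3: "Suc (Suc l) - 2 * Suc k' = Suc r" using lr by simp
    have n4: "2 * Suc l - 2 * Suc k' = 2*k' + 2*r + 2" using lr by simp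
    have n5: "Suc l - Suc k' = k' + r + 1" using lr by simp
    have n6: "Suc l - 2 * Suc k' = r" using lr by simp
    have n7: "2 * l - 2 * k' = 2*k' + 2*r + 2" using lr by simp
    have n8: "l - k' = k' + r + 1" using lr by simp
    have n9: "l - 2 * k' = Suc r" using lr by simp
    have c1: "2 * Suc k' \<le> Suc (Suc l)" "2 * Suc k' \<le> Suc l" "2 * k' \<le> l" using lr by auto
    have f1: "(of_nat (fact (Suc (Suc (2*k' + 2*r + 2)))) :: complex) = (2*K+2*R+4)*((2*K+2*R+3)*A)"
      unfolding A_def K_def R_def by (simp add: algebra_simps)
    have f2: "(of_nat (fact (Suc (k' + r + 1))) :: complex) = (K+R+2)*C"
      unfolding C_def K_def R_def by (simp add: algebra_simps)
    have f3: "(of_nat (fact (Suc r)) :: complex) = (R+1)*D"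
      unfolding D_def R_def by (simp add: algebra_simps)
    have f4: "(of_nat (fact (Suc k')) :: complex) = (K+1)*B"
      unfolding B_def K_def by (simp add: algebra_simps)
    have p1: "(2::complex)^Suc (Suc l) = 4*P" "(2::complex)^Suc l = 2*P" unfolding P_def by simp_all
    have L: "(of_nat l :: complex) = 2*K + 1 + R" unfolding K_def R_def lr by simp
    have nz: "A \<noteq> 0" "B \<noteq> 0" "C \<noteq> 0" "D \<noteq> 0" "P \<noteq> 0" "K + 1 \<noteq> 0" "R + 1 \<noteq> 0" "K + R + 2 \<noteq> 0"
      unfolding A_def B_def C_def D_def P_def K_def R_def
      by (rule fact_nz, rule fact_nz, rule fact_nz, rule fact_nz, simp, rule nat_nz(2), rule nat_nz(2), rule nat_nz(4))
    show ?thesis unfolding Suc bt_def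
      apply (simp only: c1 if_True nat.simps diff_Suc_1 n1 n2 n3 n4 n5 n6 n7 n8 n9 f1 f2 f3 f4 p1 L
         A_def[symmetric] B_def[symmetric] C_def[symmetric] D_def[symmetric] power_Suc)
      using nz by (simp add: divide_simps) algebra
  next
    case b
    define A where "A = (of_nat (fact (2*k')) :: complex)"
    define B where "B = (of_nat (fact k') :: complex)"
    define K where "K = (of_nat k' :: complex)"
    define P where "P = (2::complex)^l"
    have n1: "2 * Suc (Suc l) - 2 * Suc k' = Suc (Suc (2*k'))" using b by simp
    have n2: "Suc (Suc l) - Suc k' = Suc k'" using b by simp
    have n3: "Suc (Suc l) - 2 * Suc k' = 0" using b by simp
    have n7: "2 * l - 2 * k' = 2*k'" using b by simp
    have n8: "l - k' = k'" using b by simp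
    have n9: "l - 2 * k' = 0" using b by simp
    have c1: "2 * Suc k' \<le> Suc (Suc l)" "\<not> 2 * Suc k' \<le> Suc l" "2 * k' \<le> l" using b by auto
    have f1: "(of_nat (fact (Suc (Suc (2*k')))) :: complex) = (2*K+2)*((2*K+1)*A)"
      unfolding A_def K_def by (simp add: algebra_simps)
    have f4: "(of_nat (fact (Suc k')) :: complex) = (K+1)*B"
      unfolding B_def K_def by (simp add: algebra_simps)
    have p1: "(2::complex)^Suc (Suc l) = 4*P" unfolding P_def by simp
    have L: "(of_nat l :: complex) = 2*K" unfolding K_def b by simp
    have nz: "A \<noteq> 0" "B \<noteq> 0" "P \<noteq> 0" "K + 1 \<noteq> 0"
      unfolding A_def B_def P_def K_def
      by (rule fact_nz, rule fact_nz, simp, rule nat_nz(2))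
    show ?thesis unfolding Suc bt_def
      apply (simp only: c1 if_True if_False nat.simps diff_Suc_1 n1 n2 n3 n7 n8 n9 f1 f4 p1 L
         A_def[symmetric] B_def[symmetric] fact_0 of_nat_1 power_Suc)
      using nz by (simp add: divide_simps) algebra
  next
    case c
    then show ?thesis unfolding Suc bt_def by simp
  qed
qed

lemma shift_sum2: "(\<Sum>j\<le>Suc M. (if j = 0 then 0 else f (j-1))) = (\<Sum>j\<le>M. f j)"
  by (subst sum.atMost_Suc_shift) simp

lemma bonnetP: "(of_nat l + 2) * legendreP (Suc (Suc l)) z
   = (2* of_nat l + 3) * z * legendreP (Suc l) z - (of_nat l + 1) * legendreP l z"
proof -
  define N where "N = Suc (Suc l)"
  have hA: "legendreP (Suc (Suc l)) z = (\<Sum>k\<le>N. bt (Suc (Suc l)) k * z^(Suc (Suc l) - 2*k))"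
    by (rule legendre_ext) (simp add: N_def)
  have hB: "legendreP (Suc l) z = (\<Sum>k\<le>N. bt (Suc l) k * z^(Suc l - 2*k))"
    by (rule legendre_ext) (simp add: N_def)
  have hC: "legendreP l z = (\<Sum>k\<le>N. (if k = 0 then 0 else bt l (k-1) * z^(l - 2*(k-1))))"
  proof -
    have "legendreP l z = (\<Sum>k\<le>Suc l. bt l k * z^(l - 2*k))" by (rule legendre_ext) simp
    also have "\<dots> = (\<Sum>k\<le>N. (if k = 0 then 0 else bt l (k-1) * z^(l - 2*(k-1))))"
      unfolding N_def by (rule shift_sum2[symmetric])
    finally show ?thesis .
  qed
  have t1: "z * (bt (Suc l) k * z^(Suc l - 2*k)) = bt (Suc l) k * z^(Suc (Suc l) - 2*k)" for k
  proof (cases "2*k \<le> Suc l")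
    case True
    hence "Suc (Suc l) - 2*k = Suc (Suc l - 2*k)" by simp
    then show ?thesis by (simp add: algebra_simps)
  next
    case False then show ?thesis by (simp add: bt_def)
  qed
  have t2: "(if k = 0 then 0 else bt l (k-1) * z^(l - 2*(k-1))) = (if k = 0 then 0 else bt l (k-1)) * z^(Suc (Suc l) - 2*k)" for k
  proof (cases "k = 0")
    case True then show ?thesis by simp
  next
    case False
    show ?thesis
    proof (cases "2*(k-1) \<le> l")
      case True
      hence "l - 2*(k-1) = Suc (Suc l) - 2*k" using False by simp
      then show ?thesis using False by simp
    next
      case F2: False then show ?thesis using False by (simp add: bt_def)
    qed
  qed
  have "(2* of_nat l + 3) * z * legendreP (Suc l) z - (of_nat l + 1) * legendreP l z
      = (\<Sum>k\<le>N. (2* of_nat l + 3) * (z * (bt (Suc l) k * z^(Suc l - 2*k))) - (of_nat l + 1) * (if k = 0 then 0 else bt l (k-1) * z^(l - 2*(k-1))))"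
    unfolding hB hC sum_distrib_left sum_subtractf[symmetric] mult.assoc ..
  also have "\<dots> = (\<Sum>k\<le>N. (of_nat l + 2) * (bt (Suc (Suc l)) k * z^(Suc (Suc l) - 2*k)))"
  proof (rule sum.cong[OF refl])
    fix k
    show "(2* of_nat l + 3) * (z * (bt (Suc l) k * z^(Suc l - 2*k))) - (of_nat l + 1) * (if k = 0 then 0 else bt l (k-1) * z^(l - 2*(k-1)))
        = (of_nat l + 2) * (bt (Suc (Suc l)) k * z^(Suc (Suc l) - 2*k))"
    proof -
      define g where "g = (if k = 0 then 0 else bt l (k-1))"
      define w where "w = z^(Suc (Suc l) - 2*k)"
      have "(2 * of_nat l + 3) * (z * (bt (Suc l) k * z^(Suc l - 2*k))) - (of_nat l + 1) * (if k = 0 then 0 else bt l (k-1) * z^(l - 2*(k-1)))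
          = (2 * of_nat l + 3) * (bt (Suc l) k * w) - (of_nat l + 1) * (g * w)" unfolding t1 t2 g_def w_def ..
      also have "\<dots> = ((2 * of_nat l + 3) * bt (Suc l) k - (of_nat l + 1) * g) * w" by (simp only: left_diff_distrib mult.assoc)
      also have "\<dots> = ((of_nat l + 2) * bt (Suc (Suc l)) k) * w" unfolding g_def bp_term[of l k, symmetric] ..
      also have "\<dots> = (of_nat l + 2) * (bt (Suc (Suc l)) k * w)" by (simp only: mult.assoc)
      finally show ?thesis unfolding w_def .
    qed
  qed
  also have "\<dots> = (of_nat l + 2) * legendreP (Suc (Suc l)) z"
    unfolding hA sum_distrib_left ..
  finally show ?thesis by simp
qed

lemma legendre_01: "legendreP 0 z = 1" "legendreP (Suc 0) z = z"
  by (simp_all add: legendreP_def)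

lemma hyp_01: "hyp2F1_leg 0 0 ((1-z)/2) = 1" "hyp2F1_leg (Suc 0) 0 ((1-z)/2) = z"
  by (simp_all add: hyp2F1_leg_def field_simps)

lemma nz_l2: "(of_nat l + 2 :: complex) \<noteq> 0" using nat_nz(3) by auto

lemma legendre_hyp1: "legendreP l z = hyp2F1_leg l 0 ((1-z)/2)"
proof -
  have "\<forall>z. legendreP l z = hyp2F1_leg l 0 ((1-z)/2) \<and> legendreP (Suc l) z = hyp2F1_leg (Suc l) 0 ((1-z)/2)"
  proof (induction l)
    case 0 then show ?case using legendre_01 hyp_01 by simp
  next
    case (Suc l)
    show ?case
    proof
      fix z
      have "(of_nat l + 2) * legendreP (Suc (Suc l)) z = (of_nat l + 2) * hyp2F1_leg (Suc (Suc l)) 0 ((1-z)/2)"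
        unfolding bonnetP bonnetF using Suc by simp
      hence "legendreP (Suc (Suc l)) z = hyp2F1_leg (Suc (Suc l)) 0 ((1-z)/2)"
        using nz_l2[of l] by simp
      thus "legendreP (Suc l) z = hyp2F1_leg (Suc l) 0 ((1-z)/2) \<and> legendreP (Suc (Suc l)) z = hyp2F1_leg (Suc (Suc l)) 0 ((1-z)/2)"
        using Suc by simp
    qed
  qed
  thus ?thesis by simp
qed

lemma neg1_pow_diff: "2*k \<le> l \<Longrightarrow> (-1::complex)^(l - 2*k) = (-1)^l"
proof -
  assume "2*k \<le> l"
  hence "l = (l - 2*k) + 2*k" by simp
  hence "(-1::complex)^l = (-1)^(l-2*k) * ((-1)^2)^k" by (metis power_add power_mult)
  thus ?thesis by simp
qed

lemma legendre_parity: "legendreP l (-z) = (-1)^l * legendreP l z"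
  unfolding legendreP_def sum_distrib_left
proof (rule sum.cong[OF refl])
  fix k assume "k \<in> {..l div 2}"
  hence k: "2*k \<le> l" by auto
  show "(-1)^k * of_nat (fact (2*l - 2*k)) / (2^l * of_nat (fact k) * of_nat (fact (l - k)) * of_nat (fact (l - 2*k))) * (-z)^(l - 2*k)
     = (-1)^l * ((-1)^k * of_nat (fact (2*l - 2*k)) / (2^l * of_nat (fact k) * of_nat (fact (l - k)) * of_nat (fact (l - 2*k))) * z^(l - 2*k))"
    by (subst power_minus) (simp add: neg1_pow_diff[OF k])
qed

lemma legendre_hyp: "e = 1 \<or> e = -1 \<Longrightarrow> legendreP l z = e^l * hyp2F1_leg l 0 ((1 - e*z)/2)"
proof -
  assume "e = 1 \<or> e = -1"
  then show ?thesis
  proof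
    assume "e = 1" then show ?thesis using legendre_hyp1 by simp
  next
    assume e: "e = -1"
    have "hyp2F1_leg l 0 ((1 - e*z)/2) = legendreP l (-z)" using legendre_hyp1[of l "-z"] e by simp
    also have "\<dots> = (-1)^l * legendreP l z" by (rule legendre_parity)
    finally show ?thesis using e neg1_sq[of l] by (simp add: mult.assoc[symmetric])
  qed
qed

definition Gf :: "complex \<Rightarrow> nat \<Rightarrow> nat \<Rightarrow> complex \<Rightarrow> complex" where
  "Gf e l m z = hyp2F1_leg l m ((1 - e*z)/2) / (of_nat (fact m) * (z+e)^m)"

lemma pow_lin2: "((\<lambda>z. c * ((1 - e*z)/2)^j) has_field_derivative c * (of_nat j * ((1 - e*z)/2)^(j-1) * (-e/2))) (at (z::complex))"
proof -
  have "((\<lambda>z. ((1 - e*z)/2)^j) has_field_derivative of_nat j * ((1 - e*z)/2)^(j-1) * (-e/2)) (at z)"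
    by (rule derivative_eq_intros refl | simp)+
  thus ?thesis by (rule DERIV_cmult)
qed

lemma inv_pow_deriv: "z + e \<noteq> 0 \<Longrightarrow>
  ((\<lambda>z. inverse ((z+e)^m)) has_field_derivative - of_nat m * inverse ((z+e)^Suc m)) (at (z::complex))"
proof -
  assume nz: "z + e \<noteq> 0"
  have A: "((\<lambda>z. inverse ((z+e)^m)) has_field_derivative - (inverse ((z+e)^m) * (of_nat m * (z+e)^(m-1) * 1) * inverse ((z+e)^m))) (at z)"
    by (rule derivative_eq_intros refl | use nz in simp)+
  have B: "- (inverse ((z+e)^m) * (of_nat m * (z+e)^(m-1) * 1) * inverse ((z+e)^m)) = - of_nat m * inverse ((z+e)^Suc m)"
  proof (cases m)
    case 0 then show ?thesis by simp
  next
    case (Suc k)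
    have gen: "\<And>w c. w \<noteq> 0 \<Longrightarrow> inverse (w^Suc k) * (c * w^k * 1) * inverse (w^Suc k) = (c::complex) * inverse (w^Suc (Suc k))"
      by (simp add: field_simps)
    show ?thesis unfolding Suc diff_Suc_1 minus_mult_left gen[OF nz] ..
  qed
  show ?thesis by (rule DERIV_cong[OF A B])
qed

lemma hyp_key: "- (1 - x) * (\<Sum>j\<le>Suc l. ha l m j * (of_nat j * x^(j-1))) - of_nat m * hyp2F1_leg l m x
   = (of_nat l - of_nat m) * (of_nat l + of_nat m + 1) / (of_nat m + 1) * hyp2F1_leg l (Suc m) x"
proof -
  define D where "D = (\<Sum>j\<le>Suc l. ha l m j * (of_nat j * x^(j-1)))"
  have hl: "\<And>m. hyp2F1_leg l m x = (\<Sum>j\<le>l. ha l m j * x^j)" by (rule hyp_ext) simp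
  have D1: "D = (\<Sum>j\<le>l. (of_nat j + 1) * ha l m (Suc j) * x^j)"
    unfolding D_def by (subst sum.atMost_Suc_shift) (simp add: algebra_simps)
  have D2: "x * D = (\<Sum>j\<le>l. of_nat j * ha l m j * x^j)"
  proof -
    have "x * D = (\<Sum>j\<le>Suc l. of_nat j * ha l m j * x^j)"
      unfolding D_def sum_distrib_left
    proof (rule sum.cong[OF refl])
      fix j show "x * (ha l m j * (of_nat j * x^(j-1))) = of_nat j * ha l m j * x^j"
        by (cases j) (simp_all add: algebra_simps)
    qed
    also have "\<dots> = (\<Sum>j\<le>l. of_nat j * ha l m j * x^j)"
      using ha_zero[of l "Suc l" m] by simp
    finally show ?thesis .
  qed
  have "(\<Sum>j\<le>l. (- of_nat m * ha l m j - (of_nat j + 1) * ha l m (Suc j) + of_nat j * ha l m j) * x^j)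
     = (\<Sum>j\<le>l. ((of_nat l - of_nat m) * (of_nat l + of_nat m + 1) / (of_nat m + 1)) * (ha l (Suc m) j * x^j))"
    by (rule sum.cong[OF refl]) (simp only: dt mult.assoc)
  also have "\<dots> = (of_nat l - of_nat m) * (of_nat l + of_nat m + 1) / (of_nat m + 1) * hyp2F1_leg l (Suc m) x"
    unfolding hl sum_distrib_left ..
  finally have E: "(\<Sum>j\<le>l. (- of_nat m * ha l m j - (of_nat j + 1) * ha l m (Suc j) + of_nat j * ha l m j) * x^j)
      = (of_nat l - of_nat m) * (of_nat l + of_nat m + 1) / (of_nat m + 1) * hyp2F1_leg l (Suc m) x" .
  have "(\<Sum>j\<le>l. (- of_nat m * ha l m j - (of_nat j + 1) * ha l m (Suc j) + of_nat j * ha l m j) * x^j)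
      = - of_nat m * (\<Sum>j\<le>l. ha l m j * x^j) - (\<Sum>j\<le>l. (of_nat j + 1) * ha l m (Suc j) * x^j) + (\<Sum>j\<le>l. of_nat j * ha l m j * x^j)"
    unfolding sum_distrib_left sum_subtractf[symmetric] sum.distrib[symmetric]
    by (rule sum.cong[OF refl]) (simp add: algebra_simps)
  also have "\<dots> = - (1 - x) * D - of_nat m * hyp2F1_leg l m x"
    unfolding D1[symmetric] D2[symmetric] hl[symmetric] by (simp add: algebra_simps)
  finally show ?thesis using E unfolding D_def by simp
qed

lemma Gf_deriv:
  assumes e: "e = 1 \<or> e = -1" and nz: "z + e \<noteq> 0"
  shows "(Gf e l m has_field_derivative (of_nat l - of_nat m) * (of_nat l + of_nat m + 1) * Gf e l (Suc m) z) (at z)"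
proof -
  define x where "x = (1 - e*z)/2"
  define D where "D = (\<Sum>j\<le>Suc l. ha l m j * (of_nat j * x^(j-1)))"
  define c where "c = inverse (of_nat (fact m) :: complex)"
  have Gfe: "Gf e l m = (\<lambda>z. (\<Sum>j\<le>Suc l. ha l m j * ((1 - e*z)/2)^j) * (c * inverse ((z+e)^m)))"
    unfolding Gf_def c_def by (rule ext) (simp add: hyp_ext[of l "Suc l"] field_simps)
  have d1: "((\<lambda>z. \<Sum>j\<le>Suc l. ha l m j * ((1 - e*z)/2)^j) has_field_derivative (\<Sum>j\<le>Suc l. ha l m j * (of_nat j * x^(j-1) * (-e/2)))) (at z)"
    unfolding x_def by (rule DERIV_sum, rule pow_lin2)
  have d1': "(\<Sum>j\<le>Suc l. ha l m j * (of_nat j * x^(j-1) * (-e/2))) = D * (-e/2)"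
    unfolding D_def sum_distrib_right by (simp add: algebra_simps)
  have d2: "((\<lambda>z. c * inverse ((z+e)^m)) has_field_derivative c * (- of_nat m * inverse ((z+e)^Suc m))) (at z)"
    by (rule DERIV_cmult, rule inv_pow_deriv[OF nz])
  have H: "hyp2F1_leg l m x = (\<Sum>j\<le>Suc l. ha l m j * x^j)" by (rule hyp_ext) simp
  have DD: "((\<lambda>z. (\<Sum>j\<le>Suc l. ha l m j * ((1 - e*z)/2)^j) * (c * inverse ((z+e)^m))) has_field_derivative
     D * (-e/2) * (c * inverse ((z+e)^m)) + hyp2F1_leg l m x * (c * (- of_nat m * inverse ((z+e)^Suc m)))) (at z)"
    by (rule DERIV_cong[OF DERIV_mult[OF d1 d2]]) (unfold d1' x_def[symmetric] H[symmetric], simp add: algebra_simps)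
  have ee: "e*e = 1" using e by auto
  have zx: "(z + e) * (-e/2) = -(1 - x)" unfolding x_def using ee by (simp add: field_simps)
  have val: "D * (-e/2) * (c * inverse ((z+e)^m)) + hyp2F1_leg l m x * (c * (- of_nat m * inverse ((z+e)^Suc m)))
      = c * inverse ((z+e)^Suc m) * (- (1 - x) * D - of_nat m * hyp2F1_leg l m x)"
  proof -
    have gi: "\<And>w::complex. w \<noteq> 0 \<Longrightarrow> inverse (w^m) = w * inverse (w^Suc m)"
      by (simp add: inverse_mult_distrib mult.assoc[symmetric])
    have "inverse ((z+e)^m) = (z+e) * inverse ((z+e)^Suc m)" by (rule gi[OF nz])
    hence "D * (-e/2) * (c * inverse ((z+e)^m)) = c * inverse ((z+e)^Suc m) * (D * ((z+e) * (-e/2)))"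
      by (simp add: algebra_simps)
    also have "\<dots> = c * inverse ((z+e)^Suc m) * (- (1 - x) * D)" unfolding zx by (simp add: algebra_simps)
    finally show ?thesis by (simp add: algebra_simps)
  qed
  also have "\<dots> = c * inverse ((z+e)^Suc m) * ((of_nat l - of_nat m) * (of_nat l + of_nat m + 1) / (of_nat m + 1) * hyp2F1_leg l (Suc m) x)"
    unfolding D_def hyp_key ..
  also have "\<dots> = (of_nat l - of_nat m) * (of_nat l + of_nat m + 1) * Gf e l (Suc m) z"
  proof -
    have gen2: "\<And>Mf Y M1 K H. (Mf::complex) \<noteq> 0 \<Longrightarrow> Y \<noteq> 0 \<Longrightarrow> M1 \<noteq> 0 \<Longrightarrow>
       inverse Mf * inverse Y * (K / M1 * H) = K * (H / (M1 * Mf * Y))" by (simp add: field_simps)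
    have fs: "(of_nat (fact (Suc m)) :: complex) = (of_nat m + 1) * of_nat (fact m)" by (simp add: algebra_simps)
    show ?thesis unfolding Gf_def c_def x_def[symmetric] fs
      by (rule gen2[OF fact_nz power_not_zero[OF nz] nat_nz(2)])
  qed
  finally show ?thesis using DD unfolding Gfe by simp
qed

lemma nhds_ne: "z + e \<noteq> 0 \<Longrightarrow> \<forall>\<^sub>F w in nhds z. w + e \<noteq> (0::complex)"
proof -
  assume "z + e \<noteq> 0"
  hence "z \<noteq> -e" by (metis add_uminus_conv_diff diff_self eq_neg_iff_add_eq_0)
  hence "\<forall>\<^sub>F w in nhds z. w \<noteq> -e" by (rule t1_space_nhds)
  thus ?thesis by eventually_elim (metis add_uminus_conv_diff diff_self eq_neg_iff_add_eq_0)
qed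

definition Km :: "complex \<Rightarrow> nat \<Rightarrow> nat \<Rightarrow> complex" where
  "Km e l m = e^l * of_nat (fact (l+m)) / of_nat (fact (l-m))"

lemma Km_Suc: "Suc m \<le> l \<Longrightarrow> Km e l m * ((of_nat l - of_nat m) * (of_nat l + of_nat m + 1)) = Km e l (Suc m)"
proof -
  assume h: "Suc m \<le> l"
  have a: "l - m = Suc (l - Suc m)" using h by simp
  have b0: "(of_nat (Suc (l - Suc m)) :: complex) = of_nat l - of_nat m" using h by (simp add: of_nat_diff algebra_simps)
  have b: "(of_nat (fact (l - m)) :: complex) = (of_nat l - of_nat m) * of_nat (fact (l - Suc m))"
    unfolding a fact_Suc of_nat_id of_nat_mult b0 ..
  have c: "(of_nat (fact (l + Suc m)) :: complex) = (of_nat l + of_nat m + 1) * of_nat (fact (l + m))"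
    by (simp add: algebra_simps)
  have nz: "(of_nat l - of_nat m :: complex) \<noteq> 0" using h by simp
  show ?thesis unfolding Km_def b c using nz fact_nz[of "l - Suc m"] by (simp add: field_simps)
qed

lemma I2: "e = 1 \<or> e = -1 \<Longrightarrow> m \<le> l \<Longrightarrow> z + e \<noteq> 0 \<Longrightarrow> Pd l m z = Km e l m * Gf e l m z"
proof (induction m arbitrary: z)
  case 0
  then show ?case unfolding Km_def Gf_def using legendre_hyp[OF 0(1), of l z]
    by (simp add: Pd_def)
next
  case (Suc m)
  have ev: "\<forall>\<^sub>F w in nhds z. Pd l m w = Km e l m * Gf e l m w"
    using nhds_ne[OF Suc.prems(3)] by eventually_elim (use Suc in auto)
  have "Pd l (Suc m) z = deriv (Pd l m) z" by (simp add: Pd_Suc)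
  also have "\<dots> = deriv (\<lambda>w. Km e l m * Gf e l m w) z" by (rule deriv_cong_ev[OF ev refl])
  also have "\<dots> = Km e l m * ((of_nat l - of_nat m) * (of_nat l + of_nat m + 1) * Gf e l (Suc m) z)"
    by (rule DERIV_imp_deriv, rule DERIV_cmult, rule Gf_deriv[OF Suc.prems(1,3)])
  also have "\<dots> = (Km e l m * ((of_nat l - of_nat m) * (of_nat l + of_nat m + 1))) * Gf e l (Suc m) z"
    by (simp only: mult.assoc)
  also have "\<dots> = Km e l (Suc m) * Gf e l (Suc m) z"
    unfolding Km_Suc[OF Suc.prems(2)] ..
  finally show ?case .
qed

definition Am :: "nat \<Rightarrow> nat \<Rightarrow> complex" where
  "Am n m = of_nat (fact (n+m)) / of_nat (fact (n-m))"

lemma Cstar: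
  assumes e: "e = 1 \<or> e = -1" and mn: "m < n" and nz: "z + e \<noteq> 0"
  shows "Pd n m z / (z+e) = Pd n (Suc m) z / (of_nat n - of_nat m)
     + (-e)^n * Am n m * (\<Sum>l<n. (-1)^l * (2 * of_nat l + 1) * Gf e l (Suc m) z)"
proof -
  define x where "x = (1 - e*z)/2"
  define F0 where "F0 = hyp2F1_leg n m x"
  define F1 where "F1 = hyp2F1_leg n (Suc m) x"
  define S where "S = (\<Sum>l<n. (-1)^l * (2 * of_nat l + 1) * hyp2F1_leg l (Suc m) x)"
  define X where "X = z + e"
  define E where "E = e^n"
  define A where "A = Am n m"
  define Mf where "Mf = (of_nat (fact m) :: complex)"
  have csx: "(of_nat m + 1) * F0 - (of_nat n + of_nat m + 1) * F1 = (-1)^n * S"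
    unfolding F0_def F1_def S_def by (rule cs)
  have p0: "Pd n m z = E * A * F0 / (Mf * X^m)"
    unfolding I2[OF e less_imp_le[OF mn] nz] Km_def Gf_def E_def A_def Am_def F0_def x_def Mf_def X_def by simp
  have KS: "Km e n (Suc m) = E * A * ((of_nat n - of_nat m) * (of_nat n + of_nat m + 1))"
    using Km_Suc[of m n e] mn unfolding Km_def E_def A_def Am_def by simp
  have p1: "Pd n (Suc m) z = E * A * ((of_nat n - of_nat m) * (of_nat n + of_nat m + 1)) * F1 / ((of_nat m + 1) * Mf * X^Suc m)"
    unfolding I2[OF e Suc_leI[OF mn] nz] KS Gf_def F1_def x_def Mf_def X_def by (simp add: algebra_simps)
  have fs: "(of_nat (fact (Suc m)) :: complex) = (of_nat m + 1) * Mf" unfolding Mf_def by (simp add: algebra_simps)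
  have sG: "(\<Sum>l<n. (-1)^l * (2 * of_nat l + 1) * Gf e l (Suc m) z) = S / ((of_nat m + 1) * Mf * X^Suc m)"
    unfolding S_def sum_divide_distrib Gf_def fs x_def[symmetric] X_def[symmetric] by (simp only: times_divide_eq_right)
  have ne: "(-e)^n = (-1)^n * E" unfolding E_def by (rule power_minus)
  have nzs: "X \<noteq> 0" "Mf \<noteq> 0" "(of_nat m + 1 :: complex) \<noteq> 0" "(of_nat n - of_nat m :: complex) \<noteq> 0"
    using nz fact_nz[of m] nat_nz(2)[of m] mn unfolding X_def Mf_def by auto
  have S: "(-1)^n * S = (of_nat m + 1) * F0 - (of_nat n + of_nat m + 1) * F1" using csx by simp
  define Q where "Q = E * A / ((of_nat m + 1) * Mf * X^Suc m)"
  have g1: "\<And>M1 Mf X E A F0. M1 \<noteq> 0 \<Longrightarrow> Mf \<noteq> 0 \<Longrightarrow> (X::complex) \<noteq> 0 \<Longrightarrow>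
      E*A*F0/(Mf*X^m)/X = E*A/(M1*Mf*X^Suc m) * (M1*F0)" by (simp add: field_simps)
  have g2: "\<And>M1 Mf X E A F1 D N. M1 \<noteq> 0 \<Longrightarrow> Mf \<noteq> 0 \<Longrightarrow> (X::complex) \<noteq> 0 \<Longrightarrow> D \<noteq> 0 \<Longrightarrow>
      E*A*(D*N)*F1/(M1*Mf*X^Suc m)/D = E*A/(M1*Mf*X^Suc m) * (N*F1)" by (simp add: field_simps)
  have l1: "E * A * F0 / (Mf * X^m) / X = Q * ((of_nat m + 1) * F0)"
    unfolding Q_def by (rule g1[OF nzs(3) nzs(2) nzs(1)])
  have l2: "E * A * ((of_nat n - of_nat m) * (of_nat n + of_nat m + 1)) * F1 / ((of_nat m + 1) * Mf * X^Suc m) / (of_nat n - of_nat m)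
      = Q * ((of_nat n + of_nat m + 1) * F1)"
    unfolding Q_def by (rule g2[OF nzs(3) nzs(2) nzs(1) nzs(4)])
  have l3: "(-1)^n * E * A * (S / ((of_nat m + 1) * Mf * X^Suc m)) = Q * ((-1)^n * S)"
    unfolding Q_def by (simp add: field_simps)
  have "Pd n m z / (z+e) = Q * ((of_nat m + 1) * F0)" unfolding p0 X_def[symmetric] by (rule l1)
  also have "\<dots> = Q * ((of_nat n + of_nat m + 1) * F1) + Q * ((-1)^n * S)" unfolding S by (simp add: algebra_simps)
  also have "\<dots> = Pd n (Suc m) z / (of_nat n - of_nat m) + (-e)^n * Am n m * (\<Sum>l<n. (-1)^l * (2 * of_nat l + 1) * Gf e l (Suc m) z)"
    unfolding p1 sG ne A_def[symmetric] l2 l3[symmetric] by (simp add: mult.assoc)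
  finally show ?thesis .
qed

definition cl :: "nat \<Rightarrow> nat \<Rightarrow> complex" where
  "cl n l = (2 * of_nat l + 1) / (of_nat (n - l) * of_nat (l + n + 1))"

definition R :: "nat \<Rightarrow> complex \<Rightarrow> nat \<Rightarrow> complex \<Rightarrow> complex" where
  "R n e m z = Pd n m z * (Ln (z + e) + harm n - harm (n - m))
     + (-e)^n * Am n m * (\<Sum>l<n. (-1)^l * cl n l * Gf e l m z)
     - (-e)^n * (\<Sum>l<n. (-e)^l * cl n l * Pd l m z)"

definition Sl :: "complex set" where "Sl = {z. \<not> (Im z = 0 \<and> Re z \<le> 1)}"

lemma Sl_open: "open Sl"
  unfolding Sl_def
  by (intro open_Collect_neg closed_Collect_conj closed_Collect_eq closed_Collect_le continuous_intros)

lemma Sl_props: assumes zS: "z \<in> Sl" and e: "e = 1 \<or> e = -1"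
  shows "z + e \<notin> \<real>\<^sub>\<le>\<^sub>0" "z + e \<noteq> 0" "z - 1 \<noteq> 0" "z + 1 \<noteq> 0"
proof -
  show 1: "z + e \<notin> \<real>\<^sub>\<le>\<^sub>0" using zS e by (auto simp: Sl_def complex_nonpos_Reals_iff)
  show "z + e \<noteq> 0" using 1 by auto
  show "z - 1 \<noteq> 0"
  proof
    assume "z - 1 = 0" hence "z = 1" by simp
    thus False using zS by (simp add: Sl_def)
  qed
  show "z + 1 \<noteq> 0"
  proof
    assume "z + 1 = 0" hence "z = -1" by (simp add: add_eq_0_iff2)
    thus False using zS by (simp add: Sl_def)
  qed
qed

lemma Am_Suc: "Suc m \<le> n \<Longrightarrow> Am n (Suc m) = Am n m * ((of_nat n - of_nat m) * (of_nat n + of_nat m + 1))"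
  using Km_Suc[of m n 1] by (simp add: Km_def Am_def)

lemma cl_mul: "l < n \<Longrightarrow> cl n l * ((of_nat n - of_nat l) * (of_nat n + of_nat l + 1)) = 2 * of_nat l + 1"
proof -
  assume h: "l < n"
  have a: "(of_nat (n - l) :: complex) = of_nat n - of_nat l" using h by (simp add: of_nat_diff)
  have b: "(of_nat (l + n + 1) :: complex) = of_nat n + of_nat l + 1" by simp
  have nz: "(of_nat n - of_nat l :: complex) \<noteq> 0" "(of_nat n + of_nat l + 1 :: complex) \<noteq> 0"
    using h nat_nz(1)[of n l] by auto
  have g: "\<And>x y::complex. y \<noteq> 0 \<Longrightarrow> x / y * y = x" by simp
  show ?thesis unfolding cl_def a b by (rule g) (use nz in simp)
qed

lemma harm_diff: "m < n \<Longrightarrow> harm (n - Suc m) = harm (n - m) - 1 / (of_nat n - of_nat m :: complex)"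
proof -
  assume h: "m < n"
  have a: "n - m = Suc (n - Suc m)" using h by simp
  have b: "(of_nat (Suc (n - Suc m)) :: complex) = of_nat n - of_nat m" using h by (simp add: of_nat_diff)
  show ?thesis unfolding a harm_Suc b by (simp add: divide_inverse)
qed

lemma dLn: "z + e \<notin> \<real>\<^sub>\<le>\<^sub>0 \<Longrightarrow> ((\<lambda>z. Ln (z + e) + c) has_field_derivative inverse (z + e)) (at z)"
proof -
  assume h: "z + e \<notin> \<real>\<^sub>\<le>\<^sub>0"
  have "((\<lambda>z. Ln (z + e)) has_field_derivative inverse (z + e) * 1) (at z)"
    by (rule DERIV_chain2[where f=Ln and g="\<lambda>z. z + e", OF has_field_derivative_Ln[OF h]]) (rule derivative_eq_intros refl | simp)+
  hence "((\<lambda>z. Ln (z + e) + c) has_field_derivative inverse (z + e) * 1 + 0) (at z)"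
    by (rule DERIV_add) (rule DERIV_const)
  thus ?thesis by simp
qed

lemma Rstep:
  assumes e: "e = 1 \<or> e = -1" and mn: "m < n" and zS: "z \<in> Sl"
  shows "(R n e m has_field_derivative R n e (Suc m) z) (at z)"
proof -
  have nz: "z + e \<noteq> 0" and nr: "z + e \<notin> \<real>\<^sub>\<le>\<^sub>0" using Sl_props[OF zS e] by auto
  define c where "c = (harm n - harm (n - m) :: complex)"
  have d1: "((\<lambda>z. Pd n m z * (Ln (z + e) + c)) has_field_derivative
      Pd n (Suc m) z * (Ln (z + e) + c) + inverse (z + e) * Pd n m z) (at z)"
    by (rule DERIV_mult[OF Pd_deriv dLn[OF nr]])
  have d2: "((\<lambda>z. \<Sum>l<n. (-1)^l * cl n l * Gf e l m z) has_field_derivative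
      (\<Sum>l<n. (-1)^l * cl n l * ((of_nat l - of_nat m) * (of_nat l + of_nat m + 1) * Gf e l (Suc m) z))) (at z)"
    by (rule DERIV_sum, rule DERIV_cmult, rule Gf_deriv[OF e nz])
  have d3: "((\<lambda>z. \<Sum>l<n. (-e)^l * cl n l * Pd l m z) has_field_derivative
      (\<Sum>l<n. (-e)^l * cl n l * Pd l (Suc m) z)) (at z)"
    by (rule DERIV_sum, rule DERIV_cmult, rule Pd_deriv)
  have Rf: "R n e m = (\<lambda>z. Pd n m z * (Ln (z + e) + c) + (-e)^n * Am n m * (\<Sum>l<n. (-1)^l * cl n l * Gf e l m z)
     - (-e)^n * (\<Sum>l<n. (-e)^l * cl n l * Pd l m z))"
    unfolding R_def c_def by (rule ext) (simp add: algebra_simps)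
  have D: "(R n e m has_field_derivative
      (Pd n (Suc m) z * (Ln (z + e) + c) + inverse (z + e) * Pd n m z)
      + (-e)^n * Am n m * (\<Sum>l<n. (-1)^l * cl n l * ((of_nat l - of_nat m) * (of_nat l + of_nat m + 1) * Gf e l (Suc m) z))
      - (-e)^n * (\<Sum>l<n. (-e)^l * cl n l * Pd l (Suc m) z)) (at z)"
    unfolding Rf by (rule DERIV_diff[OF DERIV_add[OF d1 DERIV_cmult[OF d2]] DERIV_cmult[OF d3]])
  define SGd where "SGd = (\<Sum>l<n. (-1)^l * cl n l * ((of_nat l - of_nat m) * (of_nat l + of_nat m + 1) * Gf e l (Suc m) z))"
  define Sc where "Sc = (\<Sum>l<n. (-1)^l * (2 * of_nat l + 1) * Gf e l (Suc m) z)"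
  define SG1 where "SG1 = (\<Sum>l<n. (-1)^l * cl n l * Gf e l (Suc m) z)"
  have sums: "Am n (Suc m) * SG1 = Am n m * SGd + Am n m * Sc"
  proof -
    have "Am n (Suc m) * SG1 = (\<Sum>l<n. Am n m * ((-1)^l * cl n l * ((of_nat l - of_nat m) * (of_nat l + of_nat m + 1) * Gf e l (Suc m) z))
       + Am n m * ((-1)^l * (2 * of_nat l + 1) * Gf e l (Suc m) z))"
      unfolding SG1_def sum_distrib_left
    proof (rule sum.cong[OF refl])
      fix l assume "l \<in> {..<n}"
      hence ln: "l < n" by simp
      have id: "(of_nat n - of_nat m) * (of_nat n + of_nat m + 1) = (of_nat l - of_nat m) * (of_nat l + of_nat m + 1)
          + (of_nat n - of_nat l) * (of_nat n + of_nat l + (1::complex))" by algebra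
      have "Am n (Suc m) * ((-1)^l * cl n l * Gf e l (Suc m) z)
         = Am n m * ((-1)^l * Gf e l (Suc m) z) * (cl n l * ((of_nat l - of_nat m) * (of_nat l + of_nat m + 1))
           + cl n l * ((of_nat n - of_nat l) * (of_nat n + of_nat l + 1)))"
        unfolding Am_Suc[OF Suc_leI[OF mn]] id by (simp add: algebra_simps)
      also have "\<dots> = Am n m * ((-1)^l * cl n l * ((of_nat l - of_nat m) * (of_nat l + of_nat m + 1) * Gf e l (Suc m) z))
       + Am n m * ((-1)^l * (2 * of_nat l + 1) * Gf e l (Suc m) z)"
        unfolding cl_mul[OF ln] by (simp add: algebra_simps)
      finally show "Am n (Suc m) * ((-1)^l * cl n l * Gf e l (Suc m) z) = Am n m * ((-1)^l * cl n l * ((of_nat l - of_nat m) * (of_nat l + of_nat m + 1) * Gf e l (Suc m) z))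
       + Am n m * ((-1)^l * (2 * of_nat l + 1) * Gf e l (Suc m) z)" .
    qed
    also have "\<dots> = Am n m * SGd + Am n m * Sc"
      unfolding SGd_def Sc_def sum.distrib sum_distrib_left ..
    finally show ?thesis .
  qed
  have cs: "Pd n m z / (z+e) = Pd n (Suc m) z / (of_nat n - of_nat m) + (-e)^n * Am n m * Sc"
    unfolding Sc_def by (rule Cstar[OF e mn nz])
  have val: "R n e (Suc m) z = (Pd n (Suc m) z * (Ln (z + e) + c) + inverse (z + e) * Pd n m z)
      + (-e)^n * Am n m * SGd - (-e)^n * (\<Sum>l<n. (-e)^l * cl n l * Pd l (Suc m) z)"
  proof -
    have "R n e (Suc m) z = Pd n (Suc m) z * (Ln (z + e) + c) + Pd n (Suc m) z / (of_nat n - of_nat m)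
       + (-e)^n * (Am n (Suc m) * SG1) - (-e)^n * (\<Sum>l<n. (-e)^l * cl n l * Pd l (Suc m) z)"
      unfolding R_def c_def SG1_def harm_diff[OF mn] by (simp add: algebra_simps)
    also have "\<dots> = Pd n (Suc m) z * (Ln (z + e) + c) + (Pd n (Suc m) z / (of_nat n - of_nat m) + (-e)^n * Am n m * Sc)
       + (-e)^n * Am n m * SGd - (-e)^n * (\<Sum>l<n. (-e)^l * cl n l * Pd l (Suc m) z)"
      unfolding sums by (simp add: algebra_simps)
    also have "\<dots> = Pd n (Suc m) z * (Ln (z + e) + c) + Pd n m z / (z + e)
       + (-e)^n * Am n m * SGd - (-e)^n * (\<Sum>l<n. (-e)^l * cl n l * Pd l (Suc m) z)"
      unfolding cs ..
    finally show ?thesis by (simp add: divide_inverse algebra_simps)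
  qed
  show ?thesis using D unfolding val SGd_def .
qed

lemma Rbase:
  assumes e: "e = 1 \<or> e = -1" and nz: "z + e \<noteq> 0"
  shows "R n e 0 z = legendreP n z * Ln (z + e)"
proof -
  have ee: "e^l * e^l = 1" for l using e by (auto simp: power_mult_distrib[symmetric])
  have g: "Gf e l 0 z = e^l * legendreP l z" for l
    using legendre_hyp[OF e, of l z] ee[of l] unfolding Gf_def
    by (simp add: mult.assoc[symmetric])
  have s: "(\<Sum>l<n. (-1)^l * cl n l * Gf e l 0 z) = (\<Sum>l<n. (-e)^l * cl n l * Pd l 0 z)"
    by (rule sum.cong[OF refl]) (simp only: g power_minus[of e] Pd_def funpow_0 ac_simps)
  show ?thesis unfolding R_def s by (simp add: Am_def Pd_def)
qed

lemma mainR: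
  assumes e: "e = 1 \<or> e = -1"
  shows "m \<le> n \<Longrightarrow> z \<in> Sl \<Longrightarrow> (deriv ^^ m) (\<lambda>w. legendreP n w * Ln (w + e)) z = R n e m z"
proof (induction m arbitrary: z)
  case 0
  then show ?case using Rbase[OF e] Sl_props[OF 0(2) e] by simp
next
  case (Suc m)
  have ev: "\<forall>\<^sub>F w in nhds z. (deriv ^^ m) (\<lambda>w. legendreP n w * Ln (w + e)) w = R n e m w"
    using eventually_nhds_in_open[OF Sl_open Suc.prems(2)] by eventually_elim (use Suc in auto)
  have "(deriv ^^ Suc m) (\<lambda>w. legendreP n w * Ln (w + e)) z = deriv ((deriv ^^ m) (\<lambda>w. legendreP n w * Ln (w + e))) z"
    by simp
  also have "\<dots> = deriv (R n e m) z" by (rule deriv_cong_ev[OF ev refl])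
  also have "\<dots> = R n e (Suc m) z"
    by (rule DERIV_imp_deriv, rule Rstep[OF e _ Suc.prems(2)]) (use Suc.prems(1) in simp)
  finally show ?case .
qed

lemma powr_pair: "(w::complex) \<noteq> 0 \<Longrightarrow> w powr (- a) * w powr a = 1"
  by (simp add: powr_add[symmetric])

lemma powr_neg_nat: "(w::complex) \<noteq> 0 \<Longrightarrow> w powr (- (of_nat m / 2)) * w powr (- (of_nat m / 2)) = inverse (w^m)"
proof -
  assume w: "w \<noteq> 0"
  have "w powr (- (of_nat m / 2)) * w powr (- (of_nat m / 2)) = w powr (- of_nat m)"
    by (simp add: powr_add[symmetric])
  also have "\<dots> = inverse (w powr of_nat m)" by (rule powr_minus)
  also have "\<dots> = inverse (w^m)" using w by (simp add: powr_nat')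
  finally show ?thesis .
qed

lemma Wpart:
  assumes zS: "z \<in> Sl" and eps: "eps \<in> {1, -1}"
  shows "((z - 1) powr (- (of_nat m / 2)) * (z + 1) powr (- (of_nat m / 2))) * legendreP_neg_signed l m eps z
       = Gf (of_int eps) l m z"
proof -
  have z1: "z - 1 \<noteq> 0" "z + 1 \<noteq> 0" using Sl_props[OF zS, of 1] by auto
  show ?thesis
  proof (cases "eps = 1")
    case True
    have "((z - 1) powr (- (of_nat m / 2)) * (z + 1) powr (- (of_nat m / 2))) *
        ((z - 1) powr (of_nat m / 2) * (z + 1) powr (- (of_nat m / 2)))
       = ((z - 1) powr (- (of_nat m / 2)) * (z - 1) powr (of_nat m / 2)) *
         ((z + 1) powr (- (of_nat m / 2)) * (z + 1) powr (- (of_nat m / 2)))" by (simp only: ac_simps)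
    also have "\<dots> = inverse ((z+1)^m)" unfolding powr_pair[OF z1(1)] powr_neg_nat[OF z1(2)] by simp
    finally have W: "((z - 1) powr (- (of_nat m / 2)) * (z + 1) powr (- (of_nat m / 2))) *
        ((z - 1) powr (of_nat m / 2) * (z + 1) powr (- (of_nat m / 2))) = inverse ((z+1)^m)" .
    have ep: "(of_int eps :: complex) = 1" using True by simp
    show ?thesis unfolding legendreP_neg_signed_def Gf_def ep if_P[OF True] divide_inverse inverse_mult_distrib
      using W unfolding divide_inverse by algebra
  next
    case False
    hence em: "eps = -1" using eps by auto
    have "((z - 1) powr (- (of_nat m / 2)) * (z + 1) powr (- (of_nat m / 2))) *
        ((z + 1) powr (of_nat m / 2) * (z - 1) powr (- (of_nat m / 2)))
       = ((z + 1) powr (- (of_nat m / 2)) * (z + 1) powr (of_nat m / 2)) *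
         ((z - 1) powr (- (of_nat m / 2)) * (z - 1) powr (- (of_nat m / 2)))" by (simp only: ac_simps)
    also have "\<dots> = inverse ((z-1)^m)" unfolding powr_pair[OF z1(2)] powr_neg_nat[OF z1(1)] by simp
    finally have W: "((z - 1) powr (- (of_nat m / 2)) * (z + 1) powr (- (of_nat m / 2))) *
        ((z + 1) powr (of_nat m / 2) * (z - 1) powr (- (of_nat m / 2))) = inverse ((z-1)^m)" .
    have ep: "(of_int eps :: complex) = -1" using em by simp
    have zm: "z + - 1 = z - 1" by simp
    show ?thesis unfolding legendreP_neg_signed_def Gf_def ep if_not_P[OF False] zm divide_inverse inverse_mult_distrib
      using W unfolding divide_inverse by algebra
  qed
qed

lemma Digamma_diff: "m \<le> n \<Longrightarrow> Digamma (of_nat (n + 1)) - Digamma (of_nat (n - m + 1)) = (harm n - harm (n - m) :: complex)"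
proof -
  have a: "Digamma (of_nat (k + 1) :: complex) = harm k - euler_mascheroni" for k
    using Digamma_of_nat[of k] by simp
  show ?thesis unfolding a by simp
qed

lemma Gf_Pd: "e = 1 \<or> e = -1 \<Longrightarrow> m \<le> l \<Longrightarrow> z + e \<noteq> 0 \<Longrightarrow>
   Gf e l m z = e^l * of_nat (fact (l - m)) / of_nat (fact (l + m)) * Pd l m z"
proof -
  assume e: "e = 1 \<or> e = -1" and ml: "m \<le> l" and nz: "z + e \<noteq> 0"
  have ee: "e^l * e^l = 1" using e by (auto simp: power_mult_distrib[symmetric])
  show ?thesis unfolding I2[OF e ml nz] Km_def using ee fact_nz[of "l+m"] fact_nz[of "l-m"]
    by (simp add: field_simps)
qed

lemma T4eq: "m \<le> n \<Longrightarrow> (-e)^(n+m) * cc m * (\<Sum>k<n - m. (-e)^k * (2 * of_nat k + 2 * of_nat m + 1)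
              / (of_nat (n - m - k) * of_nat (k + n + m + 1))
              * (1 - of_nat (fact k * fact (n + m)) / of_nat (fact (k + 2*m) * fact (n - m)))
              * gegenbauerC k (of_nat m + 1/2) z)
   = (\<Sum>l\<in>{m..<n}. (-e)^n * (-e)^l * cl n l * (1 - Am n m * of_nat (fact (l - m)) / of_nat (fact (l + m))) * Pd l m z)"
proof -
  assume mn: "m \<le> n"
  have iv: "{m..<n} = {0 + m..<(n - m) + m}" using mn by simp
  have "(\<Sum>l\<in>{m..<n}. (-e)^n * (-e)^l * cl n l * (1 - Am n m * of_nat (fact (l - m)) / of_nat (fact (l + m))) * Pd l m z)
     = (\<Sum>k\<in>{0..<n-m}. (-e)^n * (-e)^(k+m) * cl n (k+m) * (1 - Am n m * of_nat (fact (k + m - m)) / of_nat (fact (k + m + m))) * Pd (k+m) m z)"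
    unfolding iv by (rule sum.shift_bounds_nat_ivl)
  also have "\<dots> = (\<Sum>k<n - m. (-e)^(n+m) * cc m * ((-e)^k * (2 * of_nat k + 2 * of_nat m + 1)
              / (of_nat (n - m - k) * of_nat (k + n + m + 1))
              * (1 - of_nat (fact k * fact (n + m)) / of_nat (fact (k + 2*m) * fact (n - m)))
              * gegenbauerC k (of_nat m + 1/2) z))"
    unfolding atLeast0LessThan
  proof (rule sum.cong[OF refl])
    fix k assume "k \<in> {..<n-m}"
    hence kn: "k < n - m" by simp
    have P: "Pd (k+m) m z = cc m * gegenbauerC k (of_nat m + 1/2) z" using Pd_formula[of m "k+m"] by simp
    have c: "cl n (k+m) = (2 * of_nat k + 2 * of_nat m + 1) / (of_nat (n - m - k) * of_nat (k + n + m + 1))"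
      unfolding cl_def by (simp add: algebra_simps diff_diff_left)
    have a: "Am n m * of_nat (fact (k + m - m)) / of_nat (fact (k + m + m)) = of_nat (fact k * fact (n + m)) / of_nat (fact (k + 2*m) * fact (n - m))"
    proof -
      have kk: "k + m - m = k" "k + m + m = k + 2*m" by simp_all
      show ?thesis unfolding Am_def kk of_nat_mult using fact_nz[of "n-m"] fact_nz[of "k+2*m"] by (simp add: field_simps)
    qed
    have pw: "(-e)^n * (-e)^(k+m) = (-e)^(n+m) * (-e)^k" by (simp add: power_add)
    show "(-e)^n * (-e)^(k+m) * cl n (k+m) * (1 - Am n m * of_nat (fact (k + m - m)) / of_nat (fact (k + m + m))) * Pd (k+m) m z
        = (-e)^(n+m) * cc m * ((-e)^k * (2 * of_nat k + 2 * of_nat m + 1)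
              / (of_nat (n - m - k) * of_nat (k + n + m + 1))
              * (1 - of_nat (fact k * fact (n + m)) / of_nat (fact (k + 2*m) * fact (n - m)))
              * gegenbauerC k (of_nat m + 1/2) z)"
      unfolding P c a pw by (simp add: ac_simps)
  qed
  finally show ?thesis by (simp add: sum_distrib_left)
qed

lemma split_sum: "(m::nat) \<le> n \<Longrightarrow> (\<Sum>l<n. f l) = (\<Sum>l<m. f l) + (\<Sum>l\<in>{m..<n}. f l)"
proof -
  assume mn: "m \<le> n"
  have "{..<n} = {..<m} \<union> {m..<n}" using mn by auto
  moreover have "{..<m} \<inter> {m..<n} = {}" by auto
  ultimately show ?thesis by (simp add: sum.union_disjoint)
qed

theorem mainTheorem5:
  fixes m n :: nat and eps :: int and z :: complex
  assumes "m \<le> n" and "eps \<in> {1, -1}" and "\<not> (Im z = 0 \<and> Re z \<le> 1)"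
  shows "(deriv ^^ m) (\<lambda>w. legendreP n w * Ln (w + of_int eps)) z =
      of_nat (fact (2*m)) / (2^m * of_nat (fact m)) * gegenbauerC (n - m) (of_nat m + 1/2) z
        * Ln (z + of_int eps)
    + of_nat (fact (2*m)) / (2^m * of_nat (fact m))
        * (Digamma (of_nat (n + 1)) - Digamma (of_nat (n - m + 1)))
        * gegenbauerC (n - m) (of_nat m + 1/2) z
    + (- of_int eps)^n * of_nat (fact (n + m)) / of_nat (fact (n - m))
        * ((z - 1) powr (- (of_nat m / 2)) * (z + 1) powr (- (of_nat m / 2)))
        * (\<Sum>k<m. (-1)^k * (2 * of_nat k + 1) / (of_nat (n - k) * of_nat (k + n + 1))
              * legendreP_neg_signed k m eps z)
    - (- of_int eps)^(n + m) * of_nat (fact (2*m)) / (2^m * of_nat (fact m))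
        * (\<Sum>k<n - m. (- of_int eps)^k * (2 * of_nat k + 2 * of_nat m + 1)
              / (of_nat (n - m - k) * of_nat (k + n + m + 1))
              * (1 - of_nat (fact k * fact (n + m)) / of_nat (fact (k + 2*m) * fact (n - m)))
              * gegenbauerC k (of_nat m + 1/2) z)"
proof -
  define e where "e = (of_int eps :: complex)"
  have e: "e = 1 \<or> e = -1" using assms(2) by (auto simp: e_def)
  have zS: "z \<in> Sl" using assms(3) by (simp add: Sl_def)
  have nz: "z + e \<noteq> 0" using Sl_props[OF zS e] by auto
  have L: "(deriv ^^ m) (\<lambda>w. legendreP n w * Ln (w + of_int eps)) z = R n e m z"
    using mainR[OF e assms(1) zS] unfolding e_def .
  define W where "W = ((z - 1) powr (- (of_nat m / 2)) * (z + 1) powr (- (of_nat m / 2)))"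
  define T3s where "T3s = (\<Sum>k<m. (-1)^k * (2 * of_nat k + 1) / (of_nat (n - k) * of_nat (k + n + 1))
              * legendreP_neg_signed k m eps z)"
  define T4s where "T4s = (\<Sum>k<n - m. (- e)^k * (2 * of_nat k + 2 * of_nat m + 1)
              / (of_nat (n - m - k) * of_nat (k + n + m + 1))
              * (1 - of_nat (fact k * fact (n + m)) / of_nat (fact (k + 2*m) * fact (n - m)))
              * gegenbauerC k (of_nat m + 1/2) z)"
  define G where "G = gegenbauerC (n - m) (of_nat m + 1/2) z"
  define SGr where "SGr = (\<Sum>l\<in>{m..<n}. (-1)^l * cl n l * Gf e l m z)"
  define SPr where "SPr = (\<Sum>l\<in>{m..<n}. (-e)^l * cl n l * Pd l m z)"
  have wp: "W * legendreP_neg_signed k m eps z = Gf e k m z" for k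
    using Wpart[OF zS assms(2), of m k] unfolding W_def e_def .
  have t3: "W * T3s = (\<Sum>l<m. (-1)^l * cl n l * Gf e l m z)"
    unfolding T3s_def sum_distrib_left
  proof (rule sum.cong[OF refl])
    fix k
    have "W * ((-1)^k * (2 * of_nat k + 1) / (of_nat (n - k) * of_nat (k + n + 1)) * legendreP_neg_signed k m eps z)
       = (-1)^k * ((2 * of_nat k + 1) / (of_nat (n - k) * of_nat (k + n + 1))) * (W * legendreP_neg_signed k m eps z)"
      by (simp only: ac_simps times_divide_eq_right)
    thus "W * ((-1)^k * (2 * of_nat k + 1) / (of_nat (n - k) * of_nat (k + n + 1)) * legendreP_neg_signed k m eps z)
       = (-1)^k * cl n k * Gf e k m z" unfolding wp cl_def .
  qed
  have s1: "(\<Sum>l<n. (-1)^l * cl n l * Gf e l m z) = W * T3s + SGr"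
    unfolding t3 SGr_def by (rule split_sum[OF assms(1)])
  have s2: "(\<Sum>l<n. (-e)^l * cl n l * Pd l m z) = SPr"
  proof -
    have "(\<Sum>l<m. (-e)^l * cl n l * Pd l m z) = 0" by (rule sum.neutral) (simp add: Pd_zero)
    thus ?thesis unfolding SPr_def using split_sum[OF assms(1), of "\<lambda>l. (-e)^l * cl n l * Pd l m z"] by simp
  qed
  have s3: "(-e)^n * Am n m * SGr - (-e)^n * SPr = - ((-e)^(n+m) * cc m * T4s)"
  proof -
    have "(-e)^n * Am n m * SGr - (-e)^n * SPr
        = - (\<Sum>l\<in>{m..<n}. (-e)^n * (-e)^l * cl n l * (1 - Am n m * of_nat (fact (l - m)) / of_nat (fact (l + m))) * Pd l m z)"
      unfolding SGr_def SPr_def sum_distrib_left sum_subtractf[symmetric] sum_negf[symmetric]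
    proof (rule sum.cong[OF refl])
      fix l assume "l \<in> {m..<n}"
      hence ml: "m \<le> l" by simp
      have pm: "(-e)^l = (-1)^l * e^l" by (rule power_minus)
      show "(-e)^n * Am n m * ((-1)^l * cl n l * Gf e l m z) - (-e)^n * ((-e)^l * cl n l * Pd l m z)
         = - ((-e)^n * (-e)^l * cl n l * (1 - Am n m * of_nat (fact (l - m)) / of_nat (fact (l + m))) * Pd l m z)"
        unfolding Gf_Pd[OF e ml nz] pm divide_inverse by algebra
    qed
    also have "\<dots> = - ((-e)^(n+m) * cc m * T4s)"
      unfolding T4s_def T4eq[OF assms(1), symmetric] by simp
    finally show ?thesis .
  qed
  have key: "R n e m z = cc m * G * Ln (z + e) + cc m * (harm n - harm (n - m)) * G
      + (-e)^n * Am n m * (W * T3s) - ((-e)^(n+m) * cc m * T4s)"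
  proof -
    have P: "Pd n m z = cc m * G" unfolding G_def using Pd_formula[OF assms(1)] by simp
    have "R n e m z = cc m * G * Ln (z + e) + cc m * (harm n - harm (n - m)) * G
      + (-e)^n * Am n m * (W * T3s) + ((-e)^n * Am n m * SGr - (-e)^n * SPr)"
      unfolding R_def s1 s2 P by (simp add: algebra_simps)
    thus ?thesis unfolding s3 by simp
  qed
  have H: "(deriv ^^ m) (\<lambda>w. legendreP n w * Ln (w + of_int eps)) z = cc m * G * Ln (z + e) + cc m * (harm n - harm (n - m)) * G
      + (-e)^n * Am n m * (W * T3s) - ((-e)^(n+m) * cc m * T4s)"
    unfolding L key ..
  show ?thesis using H unfolding e_def W_def T3s_def T4s_def G_def cc_def Am_def Digamma_diff[OF assms(1)]
    by (simp only: times_divide_eq_right mult.assoc)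
qed

end
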